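(* Let $G$ be a reaction network with one-dimensional stoichiometric subspace and suppose $cap_{pos}(G)=2N+1$ with $0\le N<+\infty$. If for a rate-constant vector $\kappa^*$ and a total-constant vector $c^*$, $G$ has $2N+1$ positive steady states in $\mathcal P_{c^*}$, and $N+1$ of these are stable, then $\sum_{j\in\mathcal L}(\beta_{1j}-\alpha_{1j})\kappa^*_j\prod_{i\in\mathcal J}|A_i|^{\alpha_{ij}}\prod_{i\in\{1,\dots,s\}\setminus\mathcal J}B_i^{\alpha_{ij}}\prod_{k\in\mathcal H,\,k\ne\tau}\Big(\frac{B_k}{|A_k|}-\frac{A_k}{|A_k|}\frac{B_\tau}{A_\tau}\Big)^{\gamma_{kj}}>0$, where $A_i,B_i,\gamma_{kj},\mathcal J,\mathcal H,\tau,\mathcal L$ are computed from $c^*$.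
   Context: A reaction network $G$ has species $X_1,\dots,X_s$ and $m$ reactions $\sum_{i}\alpha_{ij}X_i\to\sum_i\beta_{ij}X_i$, $\alpha_{ij},\beta_{ij}\in\mathbb Z_{\ge0}$, $(\alpha_{1j},\dots,\alpha_{sj})\neq(\beta_{1j},\dots,\beta_{sj})$. $\mathcal N$ has entries $\beta_{ij}-\alpha_{ij}$, $S=\mathrm{im}\,\mathcal N$. For $\kappa\in\mathbb R^m_{>0}$, $f(\kappa;x)=\mathcal N(\kappa_1\prod_i x_i^{\alpha_{i1}},\dots,\kappa_m\prod_i x_i^{\alpha_{im}})^\top$. Since $S$ is one-dimensional, species are labelled so that $\beta_{11}-\alpha_{11}\ne0$; for $c\in\mathbb R^{s-1}$, $\mathcal P_c=\{x\in\mathbb R^s_{\ge0}:(\beta_{i1}-\alpha_{i1})x_1-(\beta_{11}-\alpha_{11})x_i=c_{i-1},\ i=2,\dots,s\}$. A steady state is $x\ge0$ with $f(\kappa;x)=0$; positive if $x>0$; nondegenerate if $\mathrm{Jac}_f(x)(S)=S$; stable if nondegenerate and all nonzero eigenvalues of $\mathrm{Jac}_f(x)$ have negative real parts. $cap_{pos}(G)$ is the maximal $N\in\mathbb Z_{\ge0}\cup\{+\infty\}$ such that for some $\kappa,c$, $G$ has $N$ positive steady states in $\mathcal P_c$. Notation for $c^*$: $A_1=1,B_1=0$, $A_i=\frac{\beta_{i1}-\alpha_{i1}}{\beta_{11}-\alpha_{11}}$, $B_i=-\frac{c^*_{i-1}}{\beta_{11}-\alpha_{11}}$ ($i\ge2$).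 $[i]=\{k:A_k\ne0,B_k/A_k=B_i/A_i\}$ if $A_i\ne0$, $[i]=\{k:A_k=0\}$ otherwise; species labelled so that $1,\dots,r$ represent the $r$ distinct classes. $\varphi_k=\min_j\sum_{i\in[k]}\alpha_{ij}$, $\gamma_{kj}=\sum_{i\in[k]}\alpha_{ij}-\varphi_k$. $\mathcal J=\{i:A_i\ne0\}$, $\mathcal H=\{k\in\{1,\dots,r\}\cap\mathcal J:\gamma_{k1},\dots,\gamma_{km}\text{ not all equal}\}$. Standing assumption: if for some rate constants $G$ has $N$ positive steady states in $\mathcal P_{c^*}$ with $0<N<\infty$, species are labelled so that $1\in\mathcal H$. $I_i=(-B_i/A_i,+\infty)$ if $A_i>0$, $(0,+\infty)$ if $A_i=0$, $(0,-B_i/A_i)$ if $A_i<0$; $I=\bigcap_{k\in\mathcal H}I_k$; $\tau\in\mathcal H$ has $A_\tau>0$ with $-B_\tau/A_\tau$ the left endpoint of $I$; $\mathcal L=\{j:\gamma_{\tau j}=0\}$. *)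

theory Defs
  imports "HOL-Analysis.Analysis" "HOL-Library.Extended_Nat"
begin

text \<open>A reaction network G with species X_1..X_s and reactions 1..m is given by the
 reactant coefficients alpha i j and product coefficients beta i j (i species, j reaction).
 Vectors in R^s are functions nat => real that vanish outside {1..s}.\<close>

definition stoich :: "(nat \<Rightarrow> nat \<Rightarrow> nat) \<Rightarrow> (nat \<Rightarrow> nat \<Rightarrow> nat) \<Rightarrow> nat \<Rightarrow> nat \<Rightarrow> real" where
  "stoich \<alpha> \<beta> i j = real (\<beta> i j) - real (\<alpha> i j)"

definition valid_network :: "nat \<Rightarrow> nat \<Rightarrow> (nat \<Rightarrow> nat \<Rightarrow> nat) \<Rightarrow> (nat \<Rightarrow> nat \<Rightarrow> nat) \<Rightarrow> bool" where
  "valid_network s m \<alpha> \<beta> \<longleftrightarrow> 1 \<le> s \<and> 1 \<le> m \<and> (\<forall>j\<in>{1..m}. \<exists>i\<in>{1..s}. \<alpha> i j \<noteq> \<beta> i j)"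

definition stoich_subspace :: "nat \<Rightarrow> nat \<Rightarrow> (nat \<Rightarrow> nat \<Rightarrow> nat) \<Rightarrow> (nat \<Rightarrow> nat \<Rightarrow> nat) \<Rightarrow> (nat \<Rightarrow> real) set" where
  "stoich_subspace s m \<alpha> \<beta> =
     {y. \<exists>t :: nat \<Rightarrow> real. y = (\<lambda>i. if i \<in> {1..s} then (\<Sum>j=1..m. stoich \<alpha> \<beta> i j * t j) else 0)}"

definition one_dim_S :: "nat \<Rightarrow> nat \<Rightarrow> (nat \<Rightarrow> nat \<Rightarrow> nat) \<Rightarrow> (nat \<Rightarrow> nat \<Rightarrow> nat) \<Rightarrow> bool" where
  "one_dim_S s m \<alpha> \<beta> \<longleftrightarrow>
     (\<exists>v. v \<noteq> (\<lambda>_. 0) \<and> stoich_subspace s m \<alpha> \<beta> = {y. \<exists>r::real. y = (\<lambda>i. r * v i)})"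

definition rate_fun :: "nat \<Rightarrow> nat \<Rightarrow> (nat \<Rightarrow> nat \<Rightarrow> nat) \<Rightarrow> (nat \<Rightarrow> nat \<Rightarrow> nat) \<Rightarrow> (nat \<Rightarrow> real) \<Rightarrow> (nat \<Rightarrow> real) \<Rightarrow> nat \<Rightarrow> real" where
  "rate_fun s m \<alpha> \<beta> \<kappa> x i = (\<Sum>j=1..m. stoich \<alpha> \<beta> i j * (\<kappa> j * (\<Prod>l=1..s. x l ^ \<alpha> l j)))"

definition jac :: "nat \<Rightarrow> nat \<Rightarrow> (nat \<Rightarrow> nat \<Rightarrow> nat) \<Rightarrow> (nat \<Rightarrow> nat \<Rightarrow> nat) \<Rightarrow> (nat \<Rightarrow> real) \<Rightarrow> (nat \<Rightarrow> real) \<Rightarrow> nat \<Rightarrow> nat \<Rightarrow> real" where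
  "jac s m \<alpha> \<beta> \<kappa> x i k = deriv (\<lambda>t. rate_fun s m \<alpha> \<beta> \<kappa> (x(k := t)) i) (x k)"

definition compat_class :: "nat \<Rightarrow> (nat \<Rightarrow> nat \<Rightarrow> nat) \<Rightarrow> (nat \<Rightarrow> nat \<Rightarrow> nat) \<Rightarrow> (nat \<Rightarrow> real) \<Rightarrow> (nat \<Rightarrow> real) set" where
  "compat_class s \<alpha> \<beta> c =
     {x. (\<forall>i. i \<notin> {1..s} \<longrightarrow> x i = 0) \<and> (\<forall>i\<in>{1..s}. 0 \<le> x i) \<and>
         (\<forall>i\<in>{2..s}. stoich \<alpha> \<beta> i 1 * x 1 - stoich \<alpha> \<beta> 1 1 * x i = c (i - 1))}"

definition pos_steady_states :: "nat \<Rightarrow> nat \<Rightarrow> (nat \<Rightarrow> nat \<Rightarrow> nat) \<Rightarrow> (nat \<Rightarrow> nat \<Rightarrow> nat) \<Rightarrow> (nat \<Rightarrow> real) \<Rightarrow> (nat \<Rightarrow> real) \<Rightarrow> (nat \<Rightarrow> real) set" where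
  "pos_steady_states s m \<alpha> \<beta> \<kappa> c =
     {x \<in> compat_class s \<alpha> \<beta> c. (\<forall>i\<in>{1..s}. 0 < x i) \<and> (\<forall>i\<in>{1..s}. rate_fun s m \<alpha> \<beta> \<kappa> x i = 0)}"

definition ecard :: "'a set \<Rightarrow> enat" where
  "ecard A = (if finite A then enat (card A) else \<infinity>)"

definition cap_pos :: "nat \<Rightarrow> nat \<Rightarrow> (nat \<Rightarrow> nat \<Rightarrow> nat) \<Rightarrow> (nat \<Rightarrow> nat \<Rightarrow> nat) \<Rightarrow> enat" where
  "cap_pos s m \<alpha> \<beta> =
     Sup {ecard (pos_steady_states s m \<alpha> \<beta> \<kappa> c) | \<kappa> c. \<forall>j\<in>{1..m}. 0 < \<kappa> j}"

definition nondegenerate :: "nat \<Rightarrow> nat \<Rightarrow> (nat \<Rightarrow> nat \<Rightarrow> nat) \<Rightarrow> (nat \<Rightarrow> nat \<Rightarrow> nat) \<Rightarrow> (nat \<Rightarrow> real) \<Rightarrow> (nat \<Rightarrow> real) \<Rightarrow> bool" where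
  "nondegenerate s m \<alpha> \<beta> \<kappa> x \<longleftrightarrow>
     (\<lambda>y. \<lambda>i. if i \<in> {1..s} then (\<Sum>k=1..s. jac s m \<alpha> \<beta> \<kappa> x i k * y k) else 0)
       ` stoich_subspace s m \<alpha> \<beta> = stoich_subspace s m \<alpha> \<beta>"

definition jac_eigenvalue :: "nat \<Rightarrow> nat \<Rightarrow> (nat \<Rightarrow> nat \<Rightarrow> nat) \<Rightarrow> (nat \<Rightarrow> nat \<Rightarrow> nat) \<Rightarrow> (nat \<Rightarrow> real) \<Rightarrow> (nat \<Rightarrow> real) \<Rightarrow> complex \<Rightarrow> bool" where
  "jac_eigenvalue s m \<alpha> \<beta> \<kappa> x \<mu> \<longleftrightarrow>
     (\<exists>v :: nat \<Rightarrow> complex. (\<exists>i\<in>{1..s}. v i \<noteq> 0) \<and>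
        (\<forall>i\<in>{1..s}. (\<Sum>k=1..s. complex_of_real (jac s m \<alpha> \<beta> \<kappa> x i k) * v k) = \<mu> * v i))"

definition stable :: "nat \<Rightarrow> nat \<Rightarrow> (nat \<Rightarrow> nat \<Rightarrow> nat) \<Rightarrow> (nat \<Rightarrow> nat \<Rightarrow> nat) \<Rightarrow> (nat \<Rightarrow> real) \<Rightarrow> (nat \<Rightarrow> real) \<Rightarrow> bool" where
  "stable s m \<alpha> \<beta> \<kappa> x \<longleftrightarrow> nondegenerate s m \<alpha> \<beta> \<kappa> x \<and>
     (\<forall>\<mu>. jac_eigenvalue s m \<alpha> \<beta> \<kappa> x \<mu> \<and> \<mu> \<noteq> 0 \<longrightarrow> Re \<mu> < 0)"

definition A_coef :: "(nat \<Rightarrow> nat \<Rightarrow> nat) \<Rightarrow> (nat \<Rightarrow> nat \<Rightarrow> nat) \<Rightarrow> nat \<Rightarrow> real" where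
  "A_coef \<alpha> \<beta> i = (if i = 1 then 1 else stoich \<alpha> \<beta> i 1 / stoich \<alpha> \<beta> 1 1)"

definition B_coef :: "(nat \<Rightarrow> nat \<Rightarrow> nat) \<Rightarrow> (nat \<Rightarrow> nat \<Rightarrow> nat) \<Rightarrow> (nat \<Rightarrow> real) \<Rightarrow> nat \<Rightarrow> real" where
  "B_coef \<alpha> \<beta> c i = (if i = 1 then 0 else - c (i - 1) / stoich \<alpha> \<beta> 1 1)"

definition species_class :: "nat \<Rightarrow> (nat \<Rightarrow> nat \<Rightarrow> nat) \<Rightarrow> (nat \<Rightarrow> nat \<Rightarrow> nat) \<Rightarrow> (nat \<Rightarrow> real) \<Rightarrow> nat \<Rightarrow> nat set" where
  "species_class s \<alpha> \<beta> c i =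
     (if A_coef \<alpha> \<beta> i \<noteq> 0
      then {k\<in>{1..s}. A_coef \<alpha> \<beta> k \<noteq> 0 \<and>
              B_coef \<alpha> \<beta> c k / A_coef \<alpha> \<beta> k = B_coef \<alpha> \<beta> c i / A_coef \<alpha> \<beta> i}
      else {k\<in>{1..s}. A_coef \<alpha> \<beta> k = 0})"

text \<open>R is a set of class representatives (the species 1..r of the paper).\<close>
definition class_reps :: "nat \<Rightarrow> (nat \<Rightarrow> nat \<Rightarrow> nat) \<Rightarrow> (nat \<Rightarrow> nat \<Rightarrow> nat) \<Rightarrow> (nat \<Rightarrow> real) \<Rightarrow> nat set \<Rightarrow> bool" where
  "class_reps s \<alpha> \<beta> c R \<longleftrightarrow> R \<subseteq> {1..s} \<and>
     (\<forall>i\<in>{1..s}. \<exists>!k. k \<in> R \<and> species_class s \<alpha> \<beta> c k = species_class s \<alpha> \<beta> c i)"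

definition phi :: "nat \<Rightarrow> nat \<Rightarrow> (nat \<Rightarrow> nat \<Rightarrow> nat) \<Rightarrow> (nat \<Rightarrow> nat \<Rightarrow> nat) \<Rightarrow> (nat \<Rightarrow> real) \<Rightarrow> nat \<Rightarrow> nat" where
  "phi s m \<alpha> \<beta> c k = Min ((\<lambda>j. \<Sum>i\<in>species_class s \<alpha> \<beta> c k. \<alpha> i j) ` {1..m})"

definition gamma :: "nat \<Rightarrow> nat \<Rightarrow> (nat \<Rightarrow> nat \<Rightarrow> nat) \<Rightarrow> (nat \<Rightarrow> nat \<Rightarrow> nat) \<Rightarrow> (nat \<Rightarrow> real) \<Rightarrow> nat \<Rightarrow> nat \<Rightarrow> nat" where
  "gamma s m \<alpha> \<beta> c k j = (\<Sum>i\<in>species_class s \<alpha> \<beta> c k. \<alpha> i j) - phi s m \<alpha> \<beta> c k"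

definition J_set :: "nat \<Rightarrow> (nat \<Rightarrow> nat \<Rightarrow> nat) \<Rightarrow> (nat \<Rightarrow> nat \<Rightarrow> nat) \<Rightarrow> nat set" where
  "J_set s \<alpha> \<beta> = {i\<in>{1..s}. A_coef \<alpha> \<beta> i \<noteq> 0}"

definition H_set :: "nat \<Rightarrow> nat \<Rightarrow> (nat \<Rightarrow> nat \<Rightarrow> nat) \<Rightarrow> (nat \<Rightarrow> nat \<Rightarrow> nat) \<Rightarrow> (nat \<Rightarrow> real) \<Rightarrow> nat set \<Rightarrow> nat set" where
  "H_set s m \<alpha> \<beta> c R = {k \<in> R \<inter> J_set s \<alpha> \<beta>.
      \<exists>j1\<in>{1..m}. \<exists>j2\<in>{1..m}. gamma s m \<alpha> \<beta> c k j1 \<noteq> gamma s m \<alpha> \<beta> c k j2}"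

definition I_int :: "(nat \<Rightarrow> nat \<Rightarrow> nat) \<Rightarrow> (nat \<Rightarrow> nat \<Rightarrow> nat) \<Rightarrow> (nat \<Rightarrow> real) \<Rightarrow> nat \<Rightarrow> real set" where
  "I_int \<alpha> \<beta> c i =
     (if A_coef \<alpha> \<beta> i > 0 then {- B_coef \<alpha> \<beta> c i / A_coef \<alpha> \<beta> i <..}
      else if A_coef \<alpha> \<beta> i = 0 then {0 <..}
      else {0 <..< - B_coef \<alpha> \<beta> c i / A_coef \<alpha> \<beta> i})"

definition I_set :: "nat \<Rightarrow> nat \<Rightarrow> (nat \<Rightarrow> nat \<Rightarrow> nat) \<Rightarrow> (nat \<Rightarrow> nat \<Rightarrow> nat) \<Rightarrow> (nat \<Rightarrow> real) \<Rightarrow> nat set \<Rightarrow> real set" where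
  "I_set s m \<alpha> \<beta> c R = (\<Inter>k\<in>H_set s m \<alpha> \<beta> c R. I_int \<alpha> \<beta> c k)"

definition L_set :: "nat \<Rightarrow> nat \<Rightarrow> (nat \<Rightarrow> nat \<Rightarrow> nat) \<Rightarrow> (nat \<Rightarrow> nat \<Rightarrow> nat) \<Rightarrow> (nat \<Rightarrow> real) \<Rightarrow> nat \<Rightarrow> nat set" where
  "L_set s m \<alpha> \<beta> c \<tau> = {j\<in>{1..m}. gamma s m \<alpha> \<beta> c \<tau> j = 0}"

end

theory Submission
  imports Defs
begin


locale net =
  fixes s m :: nat and \<alpha> \<beta> :: "nat \<Rightarrow> nat \<Rightarrow> nat"
  assumes G: "valid_network s m \<alpha> \<beta>"
    and onedim: "one_dim_S s m \<alpha> \<beta>"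
    and lab1: "\<beta> 1 1 \<noteq> \<alpha> 1 1"
begin

abbreviation "A \<equiv> A_coef \<alpha> \<beta>"
abbreviation "St \<equiv> stoich \<alpha> \<beta>"

lemma d_nz: "St 1 1 \<noteq> 0" using lab1 by (simp add: stoich_def)

lemma s_ge1: "1 \<le> s" and m_ge1: "1 \<le> m" using G by (auto simp: valid_network_def)

lemma stoich_rel:
  assumes i: "i \<in> {1..s}" and j: "j \<in> {1..m}"
  shows "St i j = A i * St 1 j"
proof -
  obtain v where v: "v \<noteq> (\<lambda>_. 0)" and S: "stoich_subspace s m \<alpha> \<beta> = {y. \<exists>r::real. y = (\<lambda>i. r * v i)}"
    using onedim unfolding one_dim_S_def by blast
  have col: "\<exists>r. \<forall>i\<in>{1..s}. St i j = r * v i" if j: "j \<in> {1..m}" for j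
  proof -
    let ?t = "\<lambda>l. if l = j then 1 else (0::real)"
    have "(\<lambda>i. if i \<in> {1..s} then (\<Sum>l=1..m. St i l * ?t l) else 0) \<in> stoich_subspace s m \<alpha> \<beta>"
      unfolding stoich_subspace_def mem_Collect_eq by (rule exI[where x="?t"]) simp
    then obtain r where r: "(\<lambda>i. if i \<in> {1..s} then (\<Sum>l=1..m. St i l * ?t l) else 0) = (\<lambda>i. r * v i)"
      using S by auto
    have "\<forall>i\<in>{1..s}. St i j = r * v i"
    proof
      fix i assume "i \<in> {1..s}"
      have "(\<Sum>l=1..m. St i l * ?t l) = St i j"
        using j by (simp add: if_distrib cong: if_cong)
      then show "St i j = r * v i" using fun_cong[OF r, of i] \<open>i \<in> {1..s}\<close> by simp
    qed
    then show ?thesis by blast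
  qed
  obtain r1 where r1: "\<forall>i\<in>{1..s}. St i 1 = r1 * v i" using col m_ge1 by auto
  obtain rj where rj: "\<forall>i\<in>{1..s}. St i j = rj * v i" using col j by auto
  have one: "1 \<in> {1..s}" using s_ge1 by auto
  have v1: "v 1 \<noteq> 0" "r1 \<noteq> 0" using r1 one d_nz by auto
  show ?thesis
  proof (cases "i = 1")
    case True then show ?thesis by (simp add: A_coef_def)
  next
    case False
    then show ?thesis using r1 rj i one v1 by (simp add: A_coef_def field_simps)
  qed
qed

lemma stoich1_nz: assumes "j \<in> {1..m}" shows "St 1 j \<noteq> 0"
proof -
  have "\<exists>i\<in>{1..s}. \<alpha> i j \<noteq> \<beta> i j" using G assms unfolding valid_network_def by blast
  then obtain i where i: "i \<in> {1..s}" "\<alpha> i j \<noteq> \<beta> i j" by blast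
  then have "St i j \<noteq> 0" by (simp add: stoich_def)
  then show ?thesis using stoich_rel[OF i(1) assms] by auto
qed

lemma rate_rel: assumes "i \<in> {1..s}"
  shows "rate_fun s m \<alpha> \<beta> \<kappa> x i = A i * rate_fun s m \<alpha> \<beta> \<kappa> x 1"
  unfolding rate_fun_def sum_distrib_left
  by (rule sum.cong) (auto simp: stoich_rel[OF assms])

abbreviation "B c \<equiv> B_coef \<alpha> \<beta> c"

definition Xl :: "(nat \<Rightarrow> real) \<Rightarrow> real \<Rightarrow> nat \<Rightarrow> real" where
  "Xl c t = (\<lambda>i. if i \<in> {1..s} then A i * t + B c i else 0)"

definition gf :: "(nat \<Rightarrow> real) \<Rightarrow> (nat \<Rightarrow> real) \<Rightarrow> real \<Rightarrow> real" where
  "gf \<kappa> c t = rate_fun s m \<alpha> \<beta> \<kappa> (Xl c t) 1"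

lemma one_in: "1 \<in> {1..s}" using s_ge1 by auto
lemma one_inm: "1 \<in> {1..m}" using m_ge1 by auto

lemma A1: "A 1 = 1" by (simp add: A_coef_def)
lemma B1: "B c 1 = 0" by (simp add: B_coef_def)

lemma Xl1: "Xl c t 1 = t" using one_in by (simp add: Xl_def A_coef_def B_coef_def)

lemma compat_X: assumes "x \<in> compat_class s \<alpha> \<beta> c" shows "x = Xl c (x 1)"
proof
  fix i
  show "x i = Xl c (x 1) i"
  proof (cases "i \<in> {1..s}")
    case False then show ?thesis using assms unfolding compat_class_def Xl_def by auto
  next
    case True
    show ?thesis
    proof (cases "i = 1")
      case True then show ?thesis using one_in by (simp add: Xl_def A_coef_def B_coef_def)
    next
      case False
      then have "i \<in> {2..s}" using True by auto
      then have "St i 1 * x 1 - St 1 1 * x i = c (i - 1)" using assms by (simp add: compat_class_def)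
      then show ?thesis using True False d_nz by (simp add: Xl_def A_coef_def B_coef_def field_simps)
    qed
  qed
qed

lemma gf_eq: "gf \<kappa> c u = (\<Sum>j=1..m. St 1 j * (\<kappa> j * (\<Prod>l=1..s. (A l * u + B c l) ^ \<alpha> l j)))"
  unfolding gf_def rate_fun_def
  by (intro sum.cong refl arg_cong2[where f="(*)"] prod.cong) (auto simp: Xl_def)

lemma X_pos:
  assumes pos: "\<forall>i\<in>{1..s}. 0 < A i * t + B c i" and z: "gf \<kappa> c t = 0"
  shows "Xl c t \<in> pos_steady_states s m \<alpha> \<beta> \<kappa> c"
proof -
  have "Xl c t \<in> compat_class s \<alpha> \<beta> c"
    unfolding compat_class_def
  proof (intro CollectI conjI ballI allI impI)
    fix i assume "i \<in> {2..s}"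
    then show "St i 1 * Xl c t 1 - St 1 1 * Xl c t i = c (i - 1)"
      using d_nz by (simp add: Xl1 Xl_def A_coef_def B_coef_def field_simps)
  qed (use pos in \<open>auto simp: Xl_def intro: less_imp_le\<close>)
  moreover have "\<forall>i\<in>{1..s}. 0 < Xl c t i" using pos by (simp add: Xl_def)
  moreover have "\<forall>i\<in>{1..s}. rate_fun s m \<alpha> \<beta> \<kappa> (Xl c t) i = 0"
    using z rate_rel by (simp add: gf_def)
  ultimately show ?thesis unfolding pos_steady_states_def by blast
qed

definition Dk :: "(nat \<Rightarrow> real) \<Rightarrow> (nat \<Rightarrow> real) \<Rightarrow> nat \<Rightarrow> real" where
  "Dk \<kappa> x k = (\<Sum>j=1..m. St 1 j * (\<kappa> j * (real (\<alpha> k j) * x k ^ (\<alpha> k j - 1) * (\<Prod>l\<in>{1..s}-{k}. x l ^ \<alpha> l j))))"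

lemma partial_deriv:
  assumes k: "k \<in> {1..s}"
  shows "((\<lambda>u. rate_fun s m \<alpha> \<beta> \<kappa> (x(k:=u)) 1) has_real_derivative Dk \<kappa> x k) (at (x k))"
proof -
  have eq: "(\<lambda>u. rate_fun s m \<alpha> \<beta> \<kappa> (x(k:=u)) 1) =
     (\<lambda>u. \<Sum>j=1..m. St 1 j * (\<kappa> j * (u ^ \<alpha> k j * (\<Prod>l\<in>{1..s}-{k}. x l ^ \<alpha> l j))))"
  proof
    fix u
    have "(\<Prod>l=1..s. (x(k:=u)) l ^ \<alpha> l j) = u ^ \<alpha> k j * (\<Prod>l\<in>{1..s}-{k}. x l ^ \<alpha> l j)" for j
      by (subst prod.remove[OF _ k]) (auto intro!: prod.cong)
    then show "rate_fun s m \<alpha> \<beta> \<kappa> (x(k:=u)) 1 = (\<Sum>j=1..m. St 1 j * (\<kappa> j * (u ^ \<alpha> k j * (\<Prod>l\<in>{1..s}-{k}. x l ^ \<alpha> l j))))"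
      unfolding rate_fun_def by simp
  qed
  show ?thesis unfolding eq Dk_def
    by (auto intro!: derivative_eq_intros sum.cong)
qed

lemma jac_eq:
  assumes i: "i \<in> {1..s}" and k: "k \<in> {1..s}"
  shows "jac s m \<alpha> \<beta> \<kappa> x i k = A i * Dk \<kappa> x k"
proof -
  have "(\<lambda>u. rate_fun s m \<alpha> \<beta> \<kappa> (x(k:=u)) i) = (\<lambda>u. A i * rate_fun s m \<alpha> \<beta> \<kappa> (x(k:=u)) 1)"
    using rate_rel[OF i] by auto
  moreover have "((\<lambda>u. A i * rate_fun s m \<alpha> \<beta> \<kappa> (x(k:=u)) 1) has_real_derivative A i * Dk \<kappa> x k) (at (x k))"
    by (rule DERIV_cmult[OF partial_deriv[OF k]])
  ultimately show ?thesis unfolding jac_def by (simp add: DERIV_imp_deriv)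
qed

lemma gf_deriv:
  "(gf \<kappa> c has_real_derivative (\<Sum>k=1..s. A k * Dk \<kappa> (Xl c t) k)) (at t)"
proof -
  have pd: "((\<lambda>u. \<Prod>l=1..s. (A l * u + B c l) ^ \<alpha> l j) has_real_derivative
     (\<Sum>l=1..s. (real (\<alpha> l j) * (A l * t + B c l) ^ (\<alpha> l j - 1) * A l) * (\<Prod>y\<in>{1..s}-{l}. (A y * t + B c y) ^ \<alpha> y j))) (at t)" for j
    by (rule has_field_derivative_prod) (auto intro!: derivative_eq_intros)
  have d: "(gf \<kappa> c has_real_derivative (\<Sum>j=1..m. St 1 j * (\<kappa> j *
     (\<Sum>l=1..s. (real (\<alpha> l j) * (A l * t + B c l) ^ (\<alpha> l j - 1) * A l) * (\<Prod>y\<in>{1..s}-{l}. (A y * t + B c y) ^ \<alpha> y j))))) (at t)"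
    unfolding gf_eq[abs_def]
    by (intro DERIV_sum DERIV_cmult pd)
  have "(\<Sum>j=1..m. St 1 j * (\<kappa> j *
     (\<Sum>l=1..s. (real (\<alpha> l j) * (A l * t + B c l) ^ (\<alpha> l j - 1) * A l) * (\<Prod>y\<in>{1..s}-{l}. (A y * t + B c y) ^ \<alpha> y j))))
    = (\<Sum>j=1..m. \<Sum>l=1..s. A l * (St 1 j * (\<kappa> j * (real (\<alpha> l j) * Xl c t l ^ (\<alpha> l j - 1) * (\<Prod>y\<in>{1..s}-{l}. Xl c t y ^ \<alpha> y j)))))"
    unfolding sum_distrib_left
    by (intro sum.cong refl) (auto simp: Xl_def intro!: prod.cong)
  also have "\<dots> = (\<Sum>k=1..s. A k * Dk \<kappa> (Xl c t) k)"
    unfolding Dk_def sum_distrib_left by (rule sum.swap)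
  finally show ?thesis using d by simp
qed

lemma stable_deriv:
  assumes x: "x \<in> pos_steady_states s m \<alpha> \<beta> \<kappa> c" and st: "stable s m \<alpha> \<beta> \<kappa> x"
  shows "\<exists>\<mu><0. (gf \<kappa> c has_real_derivative \<mu>) (at (x 1))"
proof -
  have xX: "x = Xl c (x 1)" using x compat_X by (auto simp: pos_steady_states_def)
  define \<mu> where "\<mu> = (\<Sum>k=1..s. A k * Dk \<kappa> x k)"
  have der: "(gf \<kappa> c has_real_derivative \<mu>) (at (x 1))"
    using gf_deriv[of \<kappa> c "x 1"] xX unfolding \<mu>_def by simp
  have jrow: "(\<Sum>k=1..s. jac s m \<alpha> \<beta> \<kappa> x i k * A k) = A i * \<mu>" if i: "i \<in> {1..s}" for i
    unfolding \<mu>_def sum_distrib_left by (intro sum.cong refl) (auto simp: jac_eq[OF i])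
  have ev: "jac_eigenvalue s m \<alpha> \<beta> \<kappa> x (complex_of_real \<mu>)"
    unfolding jac_eigenvalue_def
  proof (intro exI[where x="\<lambda>i. complex_of_real (A i)"] conjI ballI)
    show "\<exists>i\<in>{1..s}. complex_of_real (A i) \<noteq> 0" using one_in A1 by force
  next
    fix i assume i: "i \<in> {1..s}"
    have "(\<Sum>k=1..s. complex_of_real (jac s m \<alpha> \<beta> \<kappa> x i k) * complex_of_real (A k))
       = complex_of_real (\<Sum>k=1..s. jac s m \<alpha> \<beta> \<kappa> x i k * A k)" by simp
    also have "\<dots> = complex_of_real \<mu> * complex_of_real (A i)" using jrow[OF i] by (simp add: mult.commute)
    finally show "(\<Sum>k=1..s. complex_of_real (jac s m \<alpha> \<beta> \<kappa> x i k) * complex_of_real (A k)) = complex_of_real \<mu> * complex_of_real (A i)" .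
  qed
  have nz: "\<mu> \<noteq> 0"
  proof
    assume mu0: "\<mu> = 0"
    let ?ys = "\<lambda>i. if i \<in> {1..s} then A i else (0::real)"
    let ?t1 = "\<lambda>j. if j = 1 then 1 / St 1 1 else (0::real)"
    have "?ys \<in> stoich_subspace s m \<alpha> \<beta>"
      unfolding stoich_subspace_def mem_Collect_eq
    proof (rule exI[where x="?t1"], rule ext)
      fix i
      show "?ys i = (if i \<in> {1..s} then \<Sum>j = 1..m. St i j * ?t1 j else 0)"
      proof (cases "i \<in> {1..s}")
        case True
        have "(\<Sum>j = 1..m. St i j * ?t1 j) = St i 1 / St 1 1"
          using one_inm by (simp add: if_distrib cong: if_cong)
        also have "\<dots> = A i" using stoich_rel[OF True one_inm] d_nz by simp
        finally show ?thesis using True by simp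
      qed auto
    qed
    then have "?ys \<in> (\<lambda>y. \<lambda>i. if i \<in> {1..s} then (\<Sum>k=1..s. jac s m \<alpha> \<beta> \<kappa> x i k * y k) else 0)
       ` stoich_subspace s m \<alpha> \<beta>"
      using st by (simp add: stable_def nondegenerate_def)
    then obtain y where y: "y \<in> stoich_subspace s m \<alpha> \<beta>" and
      yt0: "?ys = (\<lambda>i. if i \<in> {1..s} then (\<Sum>k=1..s. jac s m \<alpha> \<beta> \<kappa> x i k * y k) else 0)"
      by (auto simp: image_iff)
    from y obtain t where ty: "y = (\<lambda>i. if i \<in> {1..s} then (\<Sum>j=1..m. St i j * t j) else 0)"
      unfolding stoich_subspace_def by blast
    have "1 = (\<Sum>k=1..s. jac s m \<alpha> \<beta> \<kappa> x 1 k * y k)"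
      using fun_cong[OF yt0, of 1] one_in A1 by simp
    also have "\<dots> = (\<Sum>k=1..s. (A 1 * Dk \<kappa> x k) * (A k * (\<Sum>j = 1..m. St 1 j * t j)))"
    proof (intro sum.cong refl)
      fix k assume k: "k \<in> {1..s}"
      have "y k = (\<Sum>j=1..m. St k j * t j)" using k ty by simp
      also have "\<dots> = (\<Sum>j=1..m. A k * (St 1 j * t j))"
        by (intro sum.cong refl) (simp add: stoich_rel[OF k])
      finally have yk: "y k = A k * (\<Sum>j=1..m. St 1 j * t j)" by (simp add: sum_distrib_left)
      have jk: "jac s m \<alpha> \<beta> \<kappa> x 1 k = A 1 * Dk \<kappa> x k" by (rule jac_eq[OF one_in k])
      show "jac s m \<alpha> \<beta> \<kappa> x 1 k * y k = (A 1 * Dk \<kappa> x k) * (A k * (\<Sum>j = 1..m. St 1 j * t j))"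
        unfolding jk yk ..
    qed
    also have "\<dots> = \<mu> * (\<Sum>j = 1..m. St 1 j * t j)"
      unfolding \<mu>_def A1 sum_distrib_right by (intro sum.cong refl) simp
    finally have "1 = \<mu> * (\<Sum>j = 1..m. St 1 j * t j)" .
    then show False using mu0 by simp
  qed
  have "Re (complex_of_real \<mu>) < 0"
    using st ev nz unfolding stable_def by auto
  then show ?thesis using der by auto
qed

end



context net begin
lemma A1'[simp]: "A (Suc 0) = 1" by (simp add: A_coef_def)
lemma B1'[simp]: "B c (Suc 0) = 0" by (simp add: B_coef_def)
end

locale clsloc = net s m \<alpha> \<beta> for s m \<alpha> \<beta> +
  fixes c :: "nat \<Rightarrow> real" and R :: "nat set" and \<tau> :: nat and t0 :: real
  assumes reps: "class_reps s \<alpha> \<beta> c R"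
    and std: "1 \<in> H_set s m \<alpha> \<beta> c R"
    and tauH: "\<tau> \<in> H_set s m \<alpha> \<beta> c R"
    and tauA: "A_coef \<alpha> \<beta> \<tau> > 0"
    and tauI: "- B_coef \<alpha> \<beta> c \<tau> / A_coef \<alpha> \<beta> \<tau> = Inf (I_set s m \<alpha> \<beta> c R)"
    and feas: "\<forall>i\<in>{1..s}. 0 < A_coef \<alpha> \<beta> i * t0 + B_coef \<alpha> \<beta> c i"
begin

abbreviation "Bc \<equiv> B c"
abbreviation "J \<equiv> J_set s \<alpha> \<beta>"
abbreviation "H \<equiv> H_set s m \<alpha> \<beta> c R"
abbreviation "cl \<equiv> species_class s \<alpha> \<beta> c"
abbreviation "gam \<equiv> gamma s m \<alpha> \<beta> c"
abbreviation "ph \<equiv> phi s m \<alpha> \<beta> c"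
definition "p = - Bc \<tau> / A \<tau>"
definition "cls i = (THE k. k \<in> R \<and> cl k = cl i)"
abbreviation "Z \<equiv> cl \<tau>"

lemma R_sub: "R \<subseteq> {1..s}" using reps by (simp add: class_reps_def)
lemma H_sub: "H \<subseteq> R \<inter> J" by (auto simp: H_set_def)
lemma J_sub: "J \<subseteq> {1..s}" by (auto simp: J_set_def)
lemma J_iff: "i \<in> J \<longleftrightarrow> i \<in> {1..s} \<and> A i \<noteq> 0" by (simp add: J_set_def)
lemma tauR: "\<tau> \<in> R" and tauJ: "\<tau> \<in> J" using tauH H_sub by auto
lemma tau_s: "\<tau> \<in> {1..s}" using tauR R_sub by auto

lemma cls1: assumes "i \<in> {1..s}" shows "cls i \<in> R" "cl (cls i) = cl i"
proof -
  have "\<exists>!k. k \<in> R \<and> cl k = cl i" using reps assms by (simp add: class_reps_def)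
  then have "cls i \<in> R \<and> cl (cls i) = cl i" unfolding cls_def by (rule theI')
  then show "cls i \<in> R" "cl (cls i) = cl i" by auto
qed

lemma cls2: assumes "i \<in> {1..s}" "k \<in> R" "cl k = cl i" shows "cls i = k"
proof -
  have "\<exists>!k. k \<in> R \<and> cl k = cl i" using reps assms by (simp add: class_reps_def)
  then show ?thesis unfolding cls_def using assms by (intro the1_equality) auto
qed

lemma cls_R: "k \<in> R \<Longrightarrow> cls k = k" using cls2 R_sub by auto

lemma cls_s: "i \<in> {1..s} \<Longrightarrow> cls i \<in> {1..s}" using cls1(1) R_sub by blast

lemma self_in_cl: "i \<in> J \<Longrightarrow> i \<in> cl i" by (auto simp: species_class_def J_set_def)

lemma cl_J: "k \<in> J \<Longrightarrow> cl k = {l\<in>{1..s}. A l \<noteq> 0 \<and> Bc l / A l = Bc k / A k}"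
  by (simp add: species_class_def J_set_def)

lemma cls_J: assumes "i \<in> J" shows "cls i \<in> J"
proof (rule ccontr)
  assume a: "cls i \<notin> J"
  have i: "i \<in> {1..s}" "A i \<noteq> 0" using assms by (auto simp: J_set_def)
  have "cls i \<in> {1..s}" using cls_s i by auto
  then have "A (cls i) = 0" using a by (auto simp: J_set_def)
  then have "cl (cls i) = {k\<in>{1..s}. A k = 0}" by (simp add: species_class_def)
  moreover have "i \<in> cl (cls i)" using cls1(2)[OF i(1)] self_in_cl[OF assms] by simp
  ultimately show False using i by auto
qed

lemma cls_ratio: assumes "i \<in> J" shows "Bc i / A i = Bc (cls i) / A (cls i)"
proof -
  have i: "i \<in> {1..s}" using assms J_sub by auto
  have "i \<in> cl (cls i)" using cls1(2)[OF i] self_in_cl[OF assms] by simp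
  then show ?thesis using cl_J[OF cls_J[OF assms]] by auto
qed

lemma B_eq: assumes "i \<in> J" shows "Bc i = A i * (Bc (cls i) / A (cls i))"
proof -
  have "A i \<noteq> 0" using assms by (simp add: J_set_def)
  then have "Bc i = A i * (Bc i / A i)" by simp
  then show ?thesis using cls_ratio[OF assms] by simp
qed

lemma cl_eq_J: assumes "k \<in> J" "l \<in> J" "Bc l / A l = Bc k / A k" shows "cl l = cl k"
  using assms by (simp add: cl_J)

lemma sign_cons: assumes "i \<in> J" shows "A i * A (cls i) > 0"
proof -
  let ?k = "cls i"
  have i: "i \<in> {1..s}" using assms J_sub by auto
  have k: "?k \<in> {1..s}" "?k \<in> J" using cls_s[OF i] cls_J[OF assms] by auto
  have Ak: "A ?k \<noteq> 0" using k by (simp add: J_set_def)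
  define b where "b = Bc ?k / A ?k"
  have "0 < A i * t0 + Bc i" using feas i by auto
  then have 1: "0 < A i * (t0 + b)" using B_eq[OF assms] by (simp add: b_def algebra_simps)
  have "0 < A ?k * t0 + Bc ?k" using feas k by auto
  moreover have "A ?k * (t0 + b) = A ?k * t0 + Bc ?k" using Ak by (simp add: b_def distrib_left)
  ultimately have 2: "0 < A ?k * (t0 + b)" by simp
  have prod: "0 < (A i * A ?k) * ((t0 + b) * (t0 + b))"
    using mult_pos_pos[OF 1 2] by (simp add: algebra_simps)
  have "t0 + b \<noteq> 0" using 1 by auto
  then have sq: "0 < (t0 + b) * (t0 + b)" by (metis not_real_square_gt_zero)
  show ?thesis by (rule zero_less_mult_pos2[OF prod sq])
qed

lemma cl_char: assumes k: "k \<in> R \<inter> J" shows "cl k = {l\<in>{1..s}. l \<in> J \<and> cls l = k}"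
proof
  show "cl k \<subseteq> {l\<in>{1..s}. l \<in> J \<and> cls l = k}"
  proof
    fix l assume l: "l \<in> cl k"
    then have l1: "l \<in> {1..s}" "A l \<noteq> 0" "Bc l / A l = Bc k / A k" using cl_J k by auto
    then have lJ: "l \<in> J" by (simp add: J_set_def)
    have "cl l = cl k" using cl_eq_J[OF _ lJ l1(3)] k by auto
    then have "cls l = k" using cls2[OF l1(1)] k by auto
    then show "l \<in> {l\<in>{1..s}. l \<in> J \<and> cls l = k}" using l1 lJ by auto
  qed
next
  show "{l\<in>{1..s}. l \<in> J \<and> cls l = k} \<subseteq> cl k"
  proof
    fix l assume "l \<in> {l\<in>{1..s}. l \<in> J \<and> cls l = k}"
    then have l: "l \<in> {1..s}" "l \<in> J" "cls l = k" by auto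
    then show "l \<in> cl k" using cls1(2)[OF l(1)] self_in_cl[OF l(2)] by simp
  qed
qed

lemma grouping:
  assumes Q: "Q \<subseteq> R \<inter> J"
  shows "(\<Prod>l\<in>{l\<in>{1..s}. l \<in> J \<and> cls l \<in> Q}. G (cls l) ^ \<alpha> l j) =
         (\<Prod>k\<in>Q. G k ^ (\<Sum>l\<in>cl k. \<alpha> l j))"
proof -
  let ?S = "{l\<in>{1..s}. l \<in> J \<and> cls l \<in> Q}"
  have fQ: "finite Q" using Q R_sub finite_subset[of Q "{1..s}"] by auto
  have "(\<Prod>l\<in>?S. G (cls l) ^ \<alpha> l j) = (\<Prod>k\<in>Q. \<Prod>l\<in>{x. x \<in> ?S \<and> cls x = k}. G (cls l) ^ \<alpha> l j)"
    by (rule prod.group[symmetric]) (auto simp: fQ)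
  also have "\<dots> = (\<Prod>k\<in>Q. \<Prod>l\<in>cl k. G k ^ \<alpha> l j)"
  proof (rule prod.cong[OF refl])
    fix k assume k: "k \<in> Q"
    have kk: "k \<in> R \<inter> J" using k Q by auto
    have "{x. x \<in> ?S \<and> cls x = k} = cl k" using cl_char[OF kk] k by auto
    then show "(\<Prod>l\<in>{x. x \<in> ?S \<and> cls x = k}. G (cls l) ^ \<alpha> l j) = (\<Prod>l\<in>cl k. G k ^ \<alpha> l j)"
      by (auto intro!: prod.cong)
  qed
  also have "\<dots> = (\<Prod>k\<in>Q. G k ^ (\<Sum>l\<in>cl k. \<alpha> l j))"
    by (simp add: power_sum)
  finally show ?thesis .
qed

lemma finite_cl: "finite (cl k)" by (simp add: species_class_def)

lemma sum_cl: assumes "j \<in> {1..m}" shows "(\<Sum>l\<in>cl k. \<alpha> l j) = ph k + gam k j"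
proof -
  have "ph k \<le> (\<Sum>l\<in>cl k. \<alpha> l j)" unfolding phi_def using assms by (intro Min_le) auto
  then show ?thesis by (simp add: gamma_def)
qed

lemma gam_const: assumes "k \<in> R \<inter> J - H" "j \<in> {1..m}" shows "gam k j = gam k 1"
proof (rule ccontr)
  assume "gam k j \<noteq> gam k 1"
  then have "k \<in> H" unfolding H_set_def using assms one_inm by blast
  then show False using assms by blast
qed

lemma Z_J: "l \<in> Z \<Longrightarrow> l \<in> J" using cl_char[of \<tau>] tauR tauJ by auto
lemma Z_iff: "l \<in> J \<Longrightarrow> l \<in> Z \<longleftrightarrow> cls l = \<tau>" using cl_char[of \<tau>] tauR tauJ J_sub by auto
lemma Z_s: "Z \<subseteq> {1..s}" using Z_J J_sub by auto
lemma Z_pos: assumes "l \<in> Z" shows "A l > 0"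
proof -
  have lJ: "l \<in> J" using Z_J[OF assms] .
  have "cls l = \<tau>" using Z_iff[OF lJ] assms by simp
  then have "0 < A l * A \<tau>" using sign_cons[OF lJ] by simp
  then show ?thesis using tauA by (simp add: zero_less_mult_iff)
qed
lemma Z_B: assumes "l \<in> Z" shows "Bc l = - A l * p"
  using B_eq[OF Z_J[OF assms]] Z_iff[OF Z_J[OF assms]] assms by (simp add: p_def)

lemma t0_pos: "t0 > 0"
proof -
  have "0 < A 1 * t0 + Bc 1" using feas one_in by blast
  then have "0 < 1 * t0 + 0" unfolding A1 B1 .
  then show ?thesis by simp
qed

lemma lin_pos: assumes "0 < (a::real) * t + b" "0 < a" shows "- b / a < t"
proof -
  have "(- b / a) * a = - b" using assms(2) by simp
  moreover have "- b < t * a" using assms(1) mult.commute[of a t] by linarith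
  ultimately have "(- b / a) * a < t * a" by simp
  then show ?thesis using mult_right_less_imp_less[OF _ less_imp_le[OF assms(2)]] by blast
qed

lemma lin_neg: assumes "0 < (a::real) * t + b" "a < 0" shows "t < - b / a"
proof -
  have "(- b / a) * a = - b" using assms(2) by simp
  moreover have "- b < t * a" using assms(1) mult.commute[of a t] by linarith
  ultimately have "t * (- a) < (- b / a) * (- a)" by simp
  then show ?thesis using mult_right_less_imp_less[of t "-a" "- b / a"] assms(2) by simp
qed

lemma p_lt_t0: "p < t0"
proof -
  have "0 < A \<tau> * t0 + Bc \<tau>" using feas tau_s by blast
  then show ?thesis unfolding p_def by (rule lin_pos[OF _ tauA])
qed

lemma E_pos: assumes k: "k \<in> H - {\<tau>}" shows "A k * p + Bc k > 0"
proof -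
  have kJ: "k \<in> J" "k \<in> R" using k H_sub by auto
  have ks: "k \<in> {1..s}" using kJ J_sub by auto
  have Ak: "A k \<noteq> 0" using kJ by (simp add: J_set_def)
  have t0I: "t0 \<in> I_set s m \<alpha> \<beta> c R"
    unfolding I_set_def
  proof
    fix k' assume k': "k' \<in> H"
    then have "k' \<in> {1..s}" "A k' \<noteq> 0" using H_sub J_sub by (auto simp: J_set_def)
    moreover have "0 < A k' * t0 + Bc k'" using feas \<open>k' \<in> {1..s}\<close> by auto
    ultimately show "t0 \<in> I_int \<alpha> \<beta> c k'"
    proof (cases "A k' > 0")
      case True
      then show ?thesis using lin_pos[OF \<open>0 < A k' * t0 + Bc k'\<close> True] by (simp add: I_int_def)
    next
      case False
      then have neg: "A k' < 0" using \<open>A k' \<noteq> 0\<close> by simp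
      then show ?thesis using lin_neg[OF \<open>0 < A k' * t0 + Bc k'\<close> neg] t0_pos by (simp add: I_int_def)
    qed
  qed
  show ?thesis
  proof (cases "A k > 0")
    case True
    have "- Bc k / A k \<le> Inf (I_set s m \<alpha> \<beta> c R)"
    proof (rule cInf_greatest)
      show "I_set s m \<alpha> \<beta> c R \<noteq> {}" using t0I by auto
      fix x assume "x \<in> I_set s m \<alpha> \<beta> c R"
      then have "x \<in> I_int \<alpha> \<beta> c k" using k unfolding I_set_def by auto
      then show "- Bc k / A k \<le> x" using True by (simp add: I_int_def)
    qed
    then have le: "- Bc k / A k \<le> p" using tauI by (simp add: p_def)
    have "- Bc k / A k \<noteq> p"
    proof
      assume eq: "- Bc k / A k = p"
      then have "Bc k / A k = Bc \<tau> / A \<tau>" by (simp add: p_def)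
      then have "cl k = cl \<tau>" using cl_eq_J[OF tauJ kJ(1)] by simp
      then have "cls k = \<tau>" using cls2[OF ks tauR] by simp
      then show False using cls_R[OF kJ(2)] k by auto
    qed
    then have "- Bc k / A k < p" using le by simp
    then have "(- Bc k / A k) * A k < p * A k" using True by (rule mult_strict_right_mono)
    then have "- Bc k < p * A k" using True by simp
    then show ?thesis using mult.commute[of p "A k"] by linarith
  next
    case False
    then have "A k < 0" using Ak by simp
    moreover have "0 < A k * t0 + Bc k" using feas ks by auto
    moreover have "A k * t0 < A k * p" using mult_strict_left_mono_neg[OF p_lt_t0 \<open>A k < 0\<close>] .
    ultimately show ?thesis by linarith
  qed
qed

definition "E k = Bc k / \<bar>A k\<bar> - A k / \<bar>A k\<bar> * (Bc \<tau> / A \<tau>)"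

lemma E_eq: "E k = (A k * p + Bc k) / \<bar>A k\<bar>"
proof -
  have "(A k * p + Bc k) / \<bar>A k\<bar> = Bc k / \<bar>A k\<bar> + A k * p / \<bar>A k\<bar>"
    by (simp add: add_divide_distrib)
  moreover have "A k * p / \<bar>A k\<bar> = - (A k / \<bar>A k\<bar> * (Bc \<tau> / A \<tau>))"
    by (simp add: p_def)
  ultimately show ?thesis by (simp add: E_def)
qed

lemma E_gt: assumes "k \<in> H - {\<tau>}" shows "E k > 0"
proof -
  have kJ: "k \<in> J" using assms H_sub by auto
  then have "A k \<noteq> 0" by (simp add: J_set_def)
  then show ?thesis using E_eq E_pos[OF assms] by simp
qed

lemma ell_H: assumes l: "l \<in> J" and k: "cls l \<in> H - {\<tau>}"
  shows "A l * p + Bc l = \<bar>A l\<bar> * E (cls l)"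
proof -
  let ?k = "cls l"
  have kJ: "?k \<in> J" using cls_J[OF l] .
  have Ak: "A ?k \<noteq> 0" "A l \<noteq> 0" using kJ l by (auto simp: J_set_def)
  have sc: "A l * A ?k > 0" using sign_cons[OF l] .
  define b where "b = Bc ?k / A ?k"
  have e1: "A l * p + Bc l = A l * (p + b)" using B_eq[OF l] by (simp add: b_def algebra_simps)
  have e2: "A ?k * (p + b) = A ?k * p + Bc ?k" using Ak by (simp add: b_def distrib_left)
  have e3: "\<bar>A l\<bar> * E ?k = \<bar>A l\<bar> * (A ?k * (p + b)) / \<bar>A ?k\<bar>" by (simp add: E_eq e2)
  have "\<bar>A l\<bar> * A ?k / \<bar>A ?k\<bar> = A l"
  proof (cases "A l > 0")
    case True
    then have "A ?k > 0" using sc by (simp add: zero_less_mult_iff)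
    then show ?thesis using True by simp
  next
    case False
    then have "A l < 0" using Ak by simp
    then have "A ?k < 0" using sc by (simp add: zero_less_mult_iff)
    then show ?thesis using \<open>A l < 0\<close> by simp
  qed
  then have "\<bar>A l\<bar> * (A ?k * (p + b)) / \<bar>A ?k\<bar> = A l * (p + b)"
    by (metis times_divide_eq_left mult.assoc)
  then show ?thesis using e1 e3 by simp
qed

end


context clsloc begin

definition "NHR = R \<inter> J - H"
definition "bet K k = (if A k > 0 then K else - K) - p"
definition "modi l \<longleftrightarrow> l \<in> J \<and> cls l \<notin> H"
definition "B' K l = (if modi l then A l * bet K (cls l) else Bc l)"
definition "c' K n = - St 1 1 * B' K (Suc n)"
definition "ell l t = A l * t + Bc l"
definition "ell' K l t = A l * t + B' K l"

lemma one_R: "1 \<in> R" and one_H: "1 \<in> H" using std H_sub by auto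

lemma not_modi1: "\<not> modi 1"
  using cls_R[OF one_R] one_H by (simp add: modi_def)

lemma Bc'_eq: assumes "i \<in> {1..s}" shows "B_coef \<alpha> \<beta> (c' K) i = B' K i"
proof (cases "i = 1")
  case True
  then show ?thesis using not_modi1 by (simp add: B'_def B_coef_def)
next
  case False
  then have "Suc (i - 1) = i" using assms by auto
  then show ?thesis using False d_nz by (simp add: B_coef_def c'_def)
qed

lemma gf_c: "gf \<kappa> c t = (\<Sum>j=1..m. St 1 j * (\<kappa> j * (\<Prod>l=1..s. ell l t ^ \<alpha> l j)))"
  unfolding gf_eq ell_def ..

lemma gf_c': "gf \<kappa> (c' K) t = (\<Sum>j=1..m. St 1 j * (\<kappa> j * (\<Prod>l=1..s. ell' K l t ^ \<alpha> l j)))"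
  unfolding gf_eq ell'_def
  by (intro sum.cong refl arg_cong2[where f="(*)"] prod.cong) (auto simp: Bc'_eq)

lemma modi_J: "modi l \<Longrightarrow> l \<in> J" by (simp add: modi_def)
lemma modi_NHR: "modi l \<Longrightarrow> cls l \<in> NHR"
  using cls1(1) cls_J J_sub by (auto simp: modi_def NHR_def)
lemma NHR_sub: "NHR \<subseteq> R \<inter> J" by (auto simp: NHR_def)
lemma NHR_modi: "k \<in> NHR \<Longrightarrow> modi k" using cls_R by (auto simp: NHR_def modi_def)

lemma ell'_unmod: "\<not> modi l \<Longrightarrow> ell' K l t = ell l t"
  by (simp add: ell'_def ell_def B'_def)

lemma ell'_mod: assumes "modi l" shows "ell' K l t = A l * (t - p) + \<bar>A l\<bar> * K"
proof -
  have lJ: "l \<in> J" using assms by (simp add: modi_def)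
  have sc: "A l * A (cls l) > 0" using sign_cons[OF lJ] .
  show ?thesis
  proof (cases "A l > 0")
    case True
    then have "A (cls l) > 0" using sc by (simp add: zero_less_mult_iff)
    then show ?thesis using True assms by (simp add: ell'_def B'_def bet_def algebra_simps)
  next
    case False
    then have "A l < 0" using lJ by (simp add: J_set_def)
    then have "A (cls l) < 0" using sc by (simp add: zero_less_mult_iff)
    then show ?thesis using \<open>A l < 0\<close> assms by (simp add: ell'_def B'_def bet_def algebra_simps)
  qed
qed

lemma ell_Z: "l \<in> Z \<Longrightarrow> ell l t = A l * (t - p)"
  using Z_B by (simp add: ell_def algebra_simps)

lemma Z_notmod: "l \<in> Z \<Longrightarrow> \<not> modi l"
  using Z_iff[OF Z_J] tauH by (auto simp: modi_def)

lemma ell'_Z: "l \<in> Z \<Longrightarrow> ell' K l t = A l * (t - p)"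
  using ell'_unmod[OF Z_notmod] ell_Z by simp

lemma ell'_mod_pos: assumes "modi l" "0 < K" "\<bar>t - p\<bar> < K" shows "ell' K l t > 0"
proof -
  have "A l \<noteq> 0" using modi_J[OF assms(1)] by (simp add: J_set_def)
  then have "\<bar>A l\<bar> * \<bar>t - p\<bar> < \<bar>A l\<bar> * K" using assms(3) by simp
  moreover have "- (\<bar>A l\<bar> * \<bar>t - p\<bar>) \<le> A l * (t - p)"
    by (metis abs_ge_minus_self abs_mult minus_le_iff)
  ultimately show ?thesis using ell'_mod[OF assms(1), of K t] by linarith
qed

definition "rho K k t = (t + bet K k) / (t + Bc k / A k)"

lemma ratio_l: assumes "modi l" "ell l t \<noteq> 0" shows "ell' K l t = ell l t * rho K (cls l) t"
proof -
  let ?k = "cls l"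
  have lJ: "l \<in> J" using assms(1) by (simp add: modi_def)
  define b where "b = Bc ?k / A ?k"
  have e: "ell l t = A l * (t + b)" using B_eq[OF lJ] by (simp add: ell_def b_def algebra_simps)
  then have nz: "t + b \<noteq> 0" using assms(2) by auto
  have "ell' K l t = A l * (t + bet K ?k)" using assms(1) by (simp add: ell'_def B'_def algebra_simps)
  also have "\<dots> = A l * (t + b) * ((t + bet K ?k) / (t + b))" using nz by simp
  finally show ?thesis using e by (simp add: rho_def b_def)
qed

definition "RR K t = (\<Prod>k\<in>NHR. rho K k t ^ (ph k + gam k 1))"

lemma prod_ratio:
  assumes nz: "\<forall>l\<in>{1..s}. ell l t \<noteq> 0" and j: "j \<in> {1..m}"
  shows "(\<Prod>l=1..s. ell' K l t ^ \<alpha> l j) = (\<Prod>l=1..s. ell l t ^ \<alpha> l j) * RR K t"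
proof -
  let ?rl = "\<lambda>l. if modi l then rho K (cls l) t else 1"
  have "(\<Prod>l=1..s. ell' K l t ^ \<alpha> l j) = (\<Prod>l=1..s. (ell l t * ?rl l) ^ \<alpha> l j)"
    by (intro prod.cong refl) (use nz ratio_l ell'_unmod in auto)
  also have "\<dots> = (\<Prod>l=1..s. ell l t ^ \<alpha> l j) * (\<Prod>l=1..s. ?rl l ^ \<alpha> l j)"
    by (simp add: power_mult_distrib prod.distrib)
  also have "(\<Prod>l=1..s. ?rl l ^ \<alpha> l j) = RR K t"
  proof -
    have "(\<Prod>l=1..s. ?rl l ^ \<alpha> l j) = (\<Prod>l=1..s. if modi l then rho K (cls l) t ^ \<alpha> l j else 1)"
      by (intro prod.cong refl) auto
    also have "\<dots> = (\<Prod>l\<in>{l\<in>{1..s}. modi l}. rho K (cls l) t ^ \<alpha> l j)"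
      by (rule prod.inter_filter[symmetric]) simp
    also have "\<dots> = (\<Prod>l\<in>{l\<in>{1..s}. l \<in> J \<and> cls l \<in> NHR}. rho K (cls l) t ^ \<alpha> l j)"
    proof -
      have "{l\<in>{1..s}. modi l} = {l\<in>{1..s}. l \<in> J \<and> cls l \<in> NHR}"
        using modi_NHR by (auto simp: modi_def NHR_def)
      then show ?thesis by (simp only:)
    qed
    finally have 1: "(\<Prod>l=1..s. ?rl l ^ \<alpha> l j) = (\<Prod>l\<in>{l\<in>{1..s}. l \<in> J \<and> cls l \<in> NHR}. rho K (cls l) t ^ \<alpha> l j)" .
    have 2: "(\<Prod>l\<in>{l\<in>{1..s}. l \<in> J \<and> cls l \<in> NHR}. rho K (cls l) t ^ \<alpha> l j)
      = (\<Prod>k\<in>NHR. rho K k t ^ (\<Sum>l\<in>cl k. \<alpha> l j))"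
      by (rule grouping[OF NHR_sub])
    have 3: "(\<Prod>k\<in>NHR. rho K k t ^ (\<Sum>l\<in>cl k. \<alpha> l j)) = RR K t"
      unfolding RR_def
    proof (intro prod.cong refl)
      fix k assume k: "k \<in> NHR"
      show "rho K k t ^ (\<Sum>l\<in>cl k. \<alpha> l j) = rho K k t ^ (ph k + gam k 1)"
        using sum_cl[OF j] gam_const[of k j] k j by (simp add: NHR_def)
    qed
    show ?thesis using 1 2 3 by simp
  qed
  finally show ?thesis .
qed

lemma RR_pos: assumes pos: "\<forall>l\<in>{1..s}. ell l t > 0 \<and> ell' K l t > 0"
  shows "RR K t > 0"
  unfolding RR_def
proof (rule prod_pos)
  fix k assume k: "k \<in> NHR"
  have mk: "modi k" using NHR_modi[OF k] .
  have ks: "k \<in> {1..s}" using k NHR_sub J_sub by auto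
  have ck: "cls k = k" using k cls_R by (auto simp: NHR_def)
  have "ell' K k t = ell k t * rho K k t" using ratio_l[OF mk] pos ks ck by force
  then have "rho K k t > 0" using pos ks by (metis zero_less_mult_iff not_less_iff_gr_or_eq)
  then show "0 < rho K k t ^ (ph k + gam k 1)" by simp
qed

lemma gf_ratio:
  assumes pos: "\<forall>l\<in>{1..s}. ell l t > 0 \<and> ell' K l t > 0"
  shows "gf \<kappa> (c' K) t = RR K t * gf \<kappa> c t"
proof -
  have nz: "\<forall>l\<in>{1..s}. ell l t \<noteq> 0" using pos by auto
  show ?thesis unfolding gf_c gf_c' sum_distrib_left
  proof (intro sum.cong refl)
    fix j assume j: "j \<in> {1..m}"
    show "St 1 j * (\<kappa> j * (\<Prod>l = 1..s. ell' K l t ^ \<alpha> l j)) =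
          RR K t * (St 1 j * (\<kappa> j * (\<Prod>l = 1..s. ell l t ^ \<alpha> l j)))"
      unfolding prod_ratio[OF nz j] by (simp add: ac_simps)
  qed
qed

end


context clsloc begin

definition "Wt K j t = (\<Prod>l\<in>Z. A l ^ \<alpha> l j) * (\<Prod>l\<in>{1..s}-Z. ell' K l t ^ \<alpha> l j)"
definition "Br K \<kappa> t = (\<Sum>j=1..m. St 1 j * (\<kappa> j * ((t - p) ^ gam \<tau> j * Wt K j t)))"
abbreviation "L \<equiv> L_set s m \<alpha> \<beta> c \<tau>"

lemma finJ: "finite J" using J_sub finite_subset by blast
lemma finZ: "finite Z" by (rule finite_cl)
lemma finR: "finite R" using R_sub finite_subset by blast

lemma prod_split_Z:
  assumes j: "j \<in> {1..m}"
  shows "(\<Prod>l=1..s. ell' K l t ^ \<alpha> l j) = (t - p) ^ ph \<tau> * ((t - p) ^ gam \<tau> j * Wt K j t)"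
proof -
  have "(\<Prod>l=1..s. ell' K l t ^ \<alpha> l j) = (\<Prod>l\<in>{1..s}-Z. ell' K l t ^ \<alpha> l j) * (\<Prod>l\<in>Z. ell' K l t ^ \<alpha> l j)"
    by (rule prod.subset_diff[OF Z_s]) simp
  moreover have "(\<Prod>l\<in>Z. ell' K l t ^ \<alpha> l j) = (\<Prod>l\<in>Z. A l ^ \<alpha> l j) * (t - p) ^ (\<Sum>l\<in>Z. \<alpha> l j)"
  proof -
    have "(\<Prod>l\<in>Z. ell' K l t ^ \<alpha> l j) = (\<Prod>l\<in>Z. A l ^ \<alpha> l j * (t - p) ^ \<alpha> l j)"
      by (intro prod.cong refl) (simp add: ell'_Z power_mult_distrib)
    also have "\<dots> = (\<Prod>l\<in>Z. A l ^ \<alpha> l j) * (t - p) ^ (\<Sum>l\<in>Z. \<alpha> l j)"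
      by (simp add: prod.distrib power_sum)
    finally show ?thesis .
  qed
  moreover have "(\<Sum>l\<in>Z. \<alpha> l j) = ph \<tau> + gam \<tau> j" by (rule sum_cl[OF j])
  ultimately show ?thesis by (simp add: Wt_def power_add ac_simps)
qed

lemma gf_br: "gf \<kappa> (c' K) t = (t - p) ^ ph \<tau> * Br K \<kappa> t"
  unfolding gf_c' Br_def sum_distrib_left
proof (intro sum.cong refl)
  fix j assume j: "j \<in> {1..m}"
  show "St 1 j * (\<kappa> j * (\<Prod>l = 1..s. ell' K l t ^ \<alpha> l j)) =
        (t - p) ^ ph \<tau> * (St 1 j * (\<kappa> j * ((t - p) ^ gam \<tau> j * Wt K j t)))"
    unfolding prod_split_Z[OF j] by (simp add: ac_simps)
qed

lemma Br_cont: "isCont (Br K \<kappa>) t"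
  unfolding Br_def Wt_def ell'_def by (intro continuous_intros)

lemma Br_p: "Br K \<kappa> p = (\<Sum>j\<in>L. St 1 j * (\<kappa> j * Wt K j p))"
proof -
  have "Br K \<kappa> p = (\<Sum>j=1..m. if gam \<tau> j = 0 then St 1 j * (\<kappa> j * Wt K j p) else 0)"
    unfolding Br_def by (intro sum.cong refl) auto
  also have "\<dots> = (\<Sum>j\<in>{j\<in>{1..m}. gam \<tau> j = 0}. St 1 j * (\<kappa> j * Wt K j p))"
    by (rule sum.inter_filter[symmetric]) simp
  finally show ?thesis by (simp add: L_set_def)
qed

definition "F K k = (if k \<in> H then E k else K)"

lemma ell'_p: assumes l: "l \<in> {1..s}" "l \<notin> Z"
  shows "ell' K l p = (if l \<in> J then \<bar>A l\<bar> * F K (cls l) else Bc l)"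
proof (cases "l \<in> J")
  case False
  then have "A l = 0" "\<not> modi l" using l by (auto simp: J_set_def modi_def)
  then show ?thesis using False by (simp add: ell'_def B'_def)
next
  case lJ: True
  show ?thesis
  proof (cases "modi l")
    case True
    then have "cls l \<notin> H" by (simp add: modi_def)
    then show ?thesis using ell'_mod[OF True] lJ by (simp add: F_def)
  next
    case False
    then have h: "cls l \<in> H" using lJ by (simp add: modi_def)
    have "cls l \<noteq> \<tau>" using Z_iff[OF lJ] l by simp
    then have "A l * p + Bc l = \<bar>A l\<bar> * E (cls l)" using ell_H[OF lJ] h by simp
    then show ?thesis using ell'_unmod[OF False] lJ h by (simp add: ell_def F_def)
  qed
qed

definition "V j = (\<Prod>i\<in>J. \<bar>A i\<bar> ^ \<alpha> i j) * (\<Prod>i\<in>{1..s} - J. Bc i ^ \<alpha> i j)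
                 * (\<Prod>k\<in>H - {\<tau>}. E k ^ gam k j)"
definition "CC K = (\<Prod>k\<in>H - {\<tau>}. E k ^ ph k) * (\<Prod>k\<in>NHR. K ^ (ph k + gam k 1))"

lemma Wt_p: assumes j: "j \<in> {1..m}" shows "Wt K j p = CC K * V j"
proof -
  have fin1: "finite (J - Z)" "finite ({1..s} - J)" using finJ by auto
  have dec: "{1..s} - Z = (J - Z) \<union> ({1..s} - J)" using J_sub Z_J by auto
  have P2: "(\<Prod>l\<in>{1..s}-Z. ell' K l p ^ \<alpha> l j) =
      (\<Prod>l\<in>J-Z. ell' K l p ^ \<alpha> l j) * (\<Prod>l\<in>{1..s}-J. ell' K l p ^ \<alpha> l j)"
    unfolding dec by (rule prod.union_disjoint[OF fin1]) auto
  have P2b: "(\<Prod>l\<in>{1..s}-J. ell' K l p ^ \<alpha> l j) = (\<Prod>l\<in>{1..s}-J. Bc l ^ \<alpha> l j)"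
  proof (intro prod.cong refl)
    fix l assume l: "l \<in> {1..s} - J"
    then have "l \<notin> Z" using Z_J by auto
    then have "ell' K l p = Bc l" using ell'_p[of l K] l by auto
    then show "ell' K l p ^ \<alpha> l j = Bc l ^ \<alpha> l j" by simp
  qed
  have P2a: "(\<Prod>l\<in>J-Z. ell' K l p ^ \<alpha> l j) = (\<Prod>l\<in>J-Z. \<bar>A l\<bar> ^ \<alpha> l j) * (\<Prod>l\<in>J-Z. F K (cls l) ^ \<alpha> l j)"
  proof -
    have "(\<Prod>l\<in>J-Z. ell' K l p ^ \<alpha> l j) = (\<Prod>l\<in>J-Z. \<bar>A l\<bar> ^ \<alpha> l j * F K (cls l) ^ \<alpha> l j)"
    proof (intro prod.cong refl)
      fix l assume l: "l \<in> J - Z"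
      then have "l \<in> {1..s}" using J_sub by auto
      then have "ell' K l p = \<bar>A l\<bar> * F K (cls l)" using ell'_p[of l K] l by auto
      then show "ell' K l p ^ \<alpha> l j = \<bar>A l\<bar> ^ \<alpha> l j * F K (cls l) ^ \<alpha> l j"
        by (simp add: power_mult_distrib)
    qed
    then show ?thesis by (simp add: prod.distrib)
  qed
  have P1: "(\<Prod>l\<in>Z. A l ^ \<alpha> l j) = (\<Prod>l\<in>Z. \<bar>A l\<bar> ^ \<alpha> l j)"
  proof (intro prod.cong refl)
    fix l assume "l \<in> Z"
    then have "A l > 0" by (rule Z_pos)
    then show "A l ^ \<alpha> l j = \<bar>A l\<bar> ^ \<alpha> l j" by simp
  qed
  have PJ: "(\<Prod>i\<in>J. \<bar>A i\<bar> ^ \<alpha> i j) = (\<Prod>l\<in>J-Z. \<bar>A l\<bar> ^ \<alpha> l j) * (\<Prod>l\<in>Z. \<bar>A l\<bar> ^ \<alpha> l j)"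
    by (rule prod.subset_diff) (use Z_J finJ in auto)
  have setJZ: "J - Z = {l\<in>{1..s}. l \<in> J \<and> cls l \<in> R \<inter> J - {\<tau>}}"
    using J_sub Z_iff cls1(1) cls_J by auto
  have Q: "R \<inter> J - {\<tau>} \<subseteq> R \<inter> J" by auto
  have PF: "(\<Prod>l\<in>J-Z. F K (cls l) ^ \<alpha> l j) = (\<Prod>k\<in>R \<inter> J - {\<tau>}. F K k ^ (ph k + gam k j))"
    unfolding setJZ grouping[OF Q] using sum_cl[OF j] by simp
  have fin2: "finite (H - {\<tau>})" "finite NHR" using finR H_sub NHR_sub finite_subset by blast+
  have dec2: "R \<inter> J - {\<tau>} = (H - {\<tau>}) \<union> NHR" using H_sub tauH by (auto simp: NHR_def)
  have PF2: "(\<Prod>k\<in>R \<inter> J - {\<tau>}. F K k ^ (ph k + gam k j)) =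
      (\<Prod>k\<in>H - {\<tau>}. F K k ^ (ph k + gam k j)) * (\<Prod>k\<in>NHR. F K k ^ (ph k + gam k j))"
    unfolding dec2 by (rule prod.union_disjoint[OF fin2]) (auto simp: NHR_def)
  have PF3: "(\<Prod>k\<in>H - {\<tau>}. F K k ^ (ph k + gam k j)) = (\<Prod>k\<in>H - {\<tau>}. E k ^ ph k) * (\<Prod>k\<in>H - {\<tau>}. E k ^ gam k j)"
  proof -
    have "(\<Prod>k\<in>H - {\<tau>}. F K k ^ (ph k + gam k j)) = (\<Prod>k\<in>H - {\<tau>}. E k ^ ph k * E k ^ gam k j)"
      by (intro prod.cong refl) (simp add: F_def power_add)
    then show ?thesis by (simp add: prod.distrib)
  qed
  have PF4: "(\<Prod>k\<in>NHR. F K k ^ (ph k + gam k j)) = (\<Prod>k\<in>NHR. K ^ (ph k + gam k 1))"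
  proof (intro prod.cong refl)
    fix k assume k: "k \<in> NHR"
    then have "k \<notin> H" "gam k j = gam k 1" using gam_const[of k j] j by (auto simp: NHR_def)
    then show "F K k ^ (ph k + gam k j) = K ^ (ph k + gam k 1)" by (simp add: F_def)
  qed
  show ?thesis
    unfolding Wt_def P2 P2a P2b P1 PF PF2 PF3 PF4 V_def CC_def PJ
    by (simp add: ac_simps)
qed

lemma F_pos: assumes "0 < K" "k \<in> R \<inter> J - {\<tau>}" shows "F K k > 0"
  using assms E_gt by (auto simp: F_def)

lemma nonJ_pos: assumes "l \<in> {1..s}" "l \<notin> J" shows "Bc l > 0"
proof -
  have "A l = 0" using assms by (simp add: J_set_def)
  moreover have "0 < A l * t0 + Bc l" using feas assms(1) by blast
  ultimately show ?thesis by simp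
qed

lemma ell'_p_pos: assumes K: "0 < K" and l: "l \<in> {1..s}" "l \<notin> Z" shows "ell' K l p > 0"
proof (cases "l \<in> J")
  case True
  have "cls l \<in> R \<inter> J - {\<tau>}" using cls1(1)[OF l(1)] cls_J[OF True] Z_iff[OF True] l by auto
  then have "F K (cls l) > 0" using F_pos K by blast
  moreover have "\<bar>A l\<bar> > 0" using True by (simp add: J_set_def)
  ultimately show ?thesis using ell'_p[OF l] True by simp
next
  case False
  then show ?thesis using ell'_p[OF l] nonJ_pos l by simp
qed

lemma V_pos: "V j > 0"
proof -
  have "(\<Prod>i\<in>J. \<bar>A i\<bar> ^ \<alpha> i j) > 0" by (rule prod_pos) (simp add: J_set_def)
  moreover have "(\<Prod>i\<in>{1..s} - J. Bc i ^ \<alpha> i j) > 0" by (rule prod_pos) (use nonJ_pos in auto)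
  moreover have "(\<Prod>k\<in>H - {\<tau>}. E k ^ gam k j) > 0" by (rule prod_pos) (use E_gt in auto)
  ultimately show ?thesis by (simp add: V_def)
qed

lemma CC_pos: "0 < K \<Longrightarrow> CC K > 0"
proof -
  assume K: "0 < K"
  have "(\<Prod>k\<in>H - {\<tau>}. E k ^ ph k) > 0"
  proof (rule prod_pos)
    fix k assume "k \<in> H - {\<tau>}"
    then have "E k > 0" by (rule E_gt)
    then show "E k ^ ph k > 0" by simp
  qed
  moreover have "(\<Prod>k\<in>NHR. K ^ (ph k + gam k 1)) > 0" using K by (intro prod_pos) simp
  ultimately show ?thesis unfolding CC_def by simp
qed

end


lemma mono_chain: assumes "\<And>i. i < n \<Longrightarrow> (Q::nat \<Rightarrow> real) i < Q (Suc i)"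
  shows "i \<le> j \<Longrightarrow> j \<le> n \<Longrightarrow> Q i \<le> Q j"
proof (induction j)
  case 0 then show ?case by simp
next
  case (Suc j)
  show ?case
  proof (cases "i = Suc j")
    case True then show ?thesis by simp
  next
    case False
    then have "i \<le> j" using Suc.prems by simp
    then have "Q i \<le> Q j" using Suc by simp
    also have "Q j < Q (Suc j)" using assms Suc.prems by simp
    finally show ?thesis by simp
  qed
qed

lemma alt_roots:
  fixes f :: "real \<Rightarrow> real" and Q :: "nat \<Rightarrow> real"
  assumes cont: "\<And>x. isCont f x"
    and mono: "\<And>i. i < n \<Longrightarrow> Q i < Q (Suc i)"
    and sg: "\<And>i. i < n \<Longrightarrow> f (Q i) * f (Q (Suc i)) < 0"
  shows "\<exists>r. inj_on r {..<n} \<and> (\<forall>i<n. Q 0 < r i \<and> r i < Q n \<and> f (r i) = 0)"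
proof -
  have ex: "\<exists>r. Q i < r \<and> r < Q (Suc i) \<and> f r = 0" if i: "i < n" for i
  proof -
    have co: "continuous_on {Q i..Q (Suc i)} f" using cont by (simp add: continuous_at_imp_continuous_on)
    have le: "Q i \<le> Q (Suc i)" using mono[OF i] by simp
    have p: "f (Q i) * f (Q (Suc i)) < 0" using sg[OF i] .
    show ?thesis
    proof (cases "f (Q i) < 0")
      case True
      then have "f (Q (Suc i)) > 0" using p by (simp add: mult_less_0_iff)
      then obtain x where x: "Q i \<le> x" "x \<le> Q (Suc i)" "f x = 0"
        using IVT'[of f "Q i" 0 "Q (Suc i)"] True le co by auto
      then have "x \<noteq> Q i" "x \<noteq> Q (Suc i)" using True \<open>f (Q (Suc i)) > 0\<close> by auto
      then show ?thesis using x by force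
    next
      case False
      then have a: "f (Q i) > 0" using p by (cases "f (Q i) = 0") auto
      then have b: "f (Q (Suc i)) < 0" using p by (simp add: mult_less_0_iff)
      then obtain x where x: "Q i \<le> x" "x \<le> Q (Suc i)" "f x = 0"
        using IVT2'[of f "Q (Suc i)" 0 "Q i"] a le co by auto
      then have "x \<noteq> Q i" "x \<noteq> Q (Suc i)" using a b by auto
      then show ?thesis using x by force
    qed
  qed
  have "\<forall>i. \<exists>r. i < n \<longrightarrow> Q i < r \<and> r < Q (Suc i) \<and> f r = 0" using ex by blast
  then obtain r where r: "\<And>i. i < n \<Longrightarrow> Q i < r i \<and> r i < Q (Suc i) \<and> f (r i) = 0"
    by metis
  have mc: "\<And>i j. i \<le> j \<Longrightarrow> j \<le> n \<Longrightarrow> Q i \<le> Q j" using mono_chain[of n Q] mono by blast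
  have "inj_on r {..<n}"
  proof (rule inj_onI)
    fix i j assume ij: "i \<in> {..<n}" "j \<in> {..<n}" "r i = r j"
    show "i = j"
    proof (rule ccontr)
      assume "i \<noteq> j"
      then consider "i < j" | "j < i" by linarith
      then show False
      proof cases
        case 1
        have a: "r i < Q (Suc i)" using r[of i] ij(1) by auto
        have b: "Q (Suc i) \<le> Q j" using mc[of "Suc i" j] 1 ij(2) by auto
        have c: "Q j < r j" using r[of j] ij(2) by auto
        show False using a b c ij(3) by linarith
      next
        case 2
        have a: "r j < Q (Suc j)" using r[of j] ij(2) by auto
        have b: "Q (Suc j) \<le> Q i" using mc[of "Suc j" i] 2 ij(1) by auto
        have c: "Q i < r i" using r[of i] ij(1) by auto
        show False using a b c ij(3) by linarith
      qed
    qed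
  qed
  moreover have "\<forall>i<n. Q 0 < r i \<and> r i < Q n \<and> f (r i) = 0"
  proof (intro allI impI)
    fix i assume i: "i < n"
    have "Q 0 \<le> Q i" "Q (Suc i) \<le> Q n" using mc i by auto
    then show "Q 0 < r i \<and> r i < Q n \<and> f (r i) = 0" using r[OF i] by auto
  qed
  ultimately show ?thesis by blast
qed

lemma aff_between:
  fixes a b u v t :: real
  assumes "0 < a * u + b" "0 < a * v + b" "u \<le> t" "t \<le> v"
  shows "0 < a * t + b"
proof (cases "a \<ge> 0")
  case True
  then have "a * u \<le> a * t" using assms(3) by (rule mult_left_mono[rotated])
  then show ?thesis using assms(1) by linarith
next
  case False
  then have "a * v \<le> a * t" using assms(4) by (intro mult_left_mono_neg) auto
  then show ?thesis using assms(2) by linarith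
qed

lemma sum_upd:
  fixes a b \<kappa> :: "nat \<Rightarrow> real"
  assumes "finite S" "j0 \<in> S"
  shows "(\<Sum>j\<in>S. a j * ((\<kappa>(j0 := \<kappa> j0 + \<epsilon>)) j * b j)) = (\<Sum>j\<in>S. a j * (\<kappa> j * b j)) + \<epsilon> * (a j0 * b j0)"
proof -
  have "(\<Sum>j\<in>S. a j * ((\<kappa>(j0 := \<kappa> j0 + \<epsilon>)) j * b j)) =
        (\<Sum>j\<in>S. a j * (\<kappa> j * b j) + (if j = j0 then \<epsilon> * (a j0 * b j0) else 0))"
    by (intro sum.cong refl) (auto simp: algebra_simps)
  also have "\<dots> = (\<Sum>j\<in>S. a j * (\<kappa> j * b j)) + \<epsilon> * (a j0 * b j0)"
    using assms by (simp add: sum.distrib)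
  finally show ?thesis .
qed

lemma ev_cont_pos:
  fixes f :: "real \<Rightarrow> real"
  assumes "isCont f x" "(g \<longlongrightarrow> x) F" "0 < f x"
  shows "eventually (\<lambda>y. 0 < f (g y)) F"
  using order_tendstoD(1)[OF isCont_tendsto_compose[OF assms(1,2)] assms(3)] .

lemma ev_cont_neg:
  fixes f :: "real \<Rightarrow> real"
  assumes "isCont f x" "(g \<longlongrightarrow> x) F" "f x < 0"
  shows "eventually (\<lambda>y. f (g y) < 0) F"
  using order_tendstoD(2)[OF isCont_tendsto_compose[OF assms(1,2)] assms(3)] .

lemma tl_plus: "((\<lambda>h. x + h) \<longlongrightarrow> (x::real)) (at_right 0)"
  by (intro tendsto_eq_intros) auto
lemma tl_minus: "((\<lambda>h. x - h) \<longlongrightarrow> (x::real)) (at_right 0)"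
  by (intro tendsto_eq_intros) auto

lemma ev_deriv:
  fixes f :: "real \<Rightarrow> real"
  assumes "(f has_real_derivative \<mu>) (at x)" "\<mu> < 0" "f x = 0"
  shows "eventually (\<lambda>h. 0 < f (x - h) \<and> f (x + h) < 0) (at_right 0)"
proof -
  obtain d1 where d1: "d1 > 0" "\<forall>h>0. h < d1 \<longrightarrow> f x < f (x - h)" using DERIV_neg_dec_left[OF assms(1,2)] by blast
  obtain d2 where d2: "d2 > 0" "\<forall>h>0. h < d2 \<longrightarrow> f x > f (x + h)" using DERIV_neg_dec_right[OF assms(1,2)] by blast
  show ?thesis unfolding eventually_at_right_field
    using d1 d2 assms(3) by (intro exI[where x="min d1 d2"]) auto
qed

lemma ev_small: "(0::real) < c \<Longrightarrow> eventually (\<lambda>h. h < c) (at_right 0)"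
  using eventually_at_right_real[of 0 c] by (auto elim: eventually_mono)

context net begin

lemma gf_pert: assumes "j0 \<in> {1..m}"
  shows "gf (\<kappa>(j0 := \<kappa> j0 + \<epsilon>)) c t = gf \<kappa> c t + \<epsilon> * (St 1 j0 * (\<Prod>l=1..s. (A l * t + B c l) ^ \<alpha> l j0))"
  unfolding gf_eq by (rule sum_upd) (use assms in auto)

lemma gf_cont: "isCont (gf \<kappa> c) t"
proof -
  have "gf \<kappa> c = (\<lambda>u. \<Sum>j=1..m. St 1 j * (\<kappa> j * (\<Prod>l=1..s. (A l * u + B c l) ^ \<alpha> l j)))"
    by (rule ext) (rule gf_eq)
  then show ?thesis by (simp add: continuous_intros)
qed

end

theorem lemma7p6:
  fixes s m N :: nat and \<alpha> \<beta> :: "nat \<Rightarrow> nat \<Rightarrow> nat"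
    and \<kappa>s cs :: "nat \<Rightarrow> real" and R :: "nat set" and \<tau> :: nat
  assumes G: "valid_network s m \<alpha> \<beta>"
    and onedim: "one_dim_S s m \<alpha> \<beta>"
    and lab1: "\<beta> 1 1 \<noteq> \<alpha> 1 1"
    and cap: "cap_pos s m \<alpha> \<beta> = enat (2 * N + 1)"
    and kpos: "\<forall>j\<in>{1..m}. 0 < \<kappa>s j"
    and fin: "finite (pos_steady_states s m \<alpha> \<beta> \<kappa>s cs)"
    and card: "card (pos_steady_states s m \<alpha> \<beta> \<kappa>s cs) = 2 * N + 1"
    and stab: "\<exists>T \<subseteq> pos_steady_states s m \<alpha> \<beta> \<kappa>s cs. card T = N + 1 \<and>
                 (\<forall>x\<in>T. stable s m \<alpha> \<beta> \<kappa>s x)"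
    and reps: "class_reps s \<alpha> \<beta> cs R"
    and std: "1 \<in> H_set s m \<alpha> \<beta> cs R"
    and tauH: "\<tau> \<in> H_set s m \<alpha> \<beta> cs R"
    and tauA: "A_coef \<alpha> \<beta> \<tau> > 0"
    and tauI: "- B_coef \<alpha> \<beta> cs \<tau> / A_coef \<alpha> \<beta> \<tau> = Inf (I_set s m \<alpha> \<beta> cs R)"
  shows "(\<Sum>j\<in>L_set s m \<alpha> \<beta> cs \<tau>.
           stoich \<alpha> \<beta> 1 j * \<kappa>s j
           * (\<Prod>i\<in>J_set s \<alpha> \<beta>. \<bar>A_coef \<alpha> \<beta> i\<bar> ^ \<alpha> i j)
           * (\<Prod>i\<in>{1..s} - J_set s \<alpha> \<beta>. B_coef \<alpha> \<beta> cs i ^ \<alpha> i j)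
           * (\<Prod>k\<in>H_set s m \<alpha> \<beta> cs R - {\<tau>}.
                (B_coef \<alpha> \<beta> cs k / \<bar>A_coef \<alpha> \<beta> k\<bar>
                 - A_coef \<alpha> \<beta> k / \<bar>A_coef \<alpha> \<beta> k\<bar> * (B_coef \<alpha> \<beta> cs \<tau> / A_coef \<alpha> \<beta> \<tau>))
                ^ gamma s m \<alpha> \<beta> cs k j)) > 0"
  proof -
  interpret net s m \<alpha> \<beta> using G onedim lab1 by unfold_locales
  obtain T where T: "T \<subseteq> pos_steady_states s m \<alpha> \<beta> \<kappa>s cs" "card T = N + 1"
      "\<forall>x\<in>T. stable s m \<alpha> \<beta> \<kappa>s x" using stab by blast
  have finT: "finite T" using T(2) card.infinite by fastforce
  define Sg where "Sg = (\<lambda>x. x 1) ` T"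
  have xX: "x = Xl cs (x 1)" if "x \<in> pos_steady_states s m \<alpha> \<beta> \<kappa>s cs" for x
    using compat_X that by (auto simp: pos_steady_states_def)
  have injT: "inj_on (\<lambda>x. x 1) T"
    by (rule inj_onI) (metis T(1) subsetD xX)
  have cardSg: "card Sg = N + 1" using card_image[OF injT] T(2) by (simp add: Sg_def)
  have finSg: "finite Sg" using finT by (simp add: Sg_def)
  have Sgfeas: "\<forall>i\<in>{1..s}. 0 < A i * \<sigma> + B cs i" if "\<sigma> \<in> Sg" for \<sigma>
  proof -
    have "\<sigma> \<in> (\<lambda>x. x 1) ` T" using that unfolding Sg_def .
    then obtain x where x: "x \<in> T" "\<sigma> = x 1" by (rule imageE) simp
    have xp: "x \<in> pos_steady_states s m \<alpha> \<beta> \<kappa>s cs" using x T(1) by auto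
    show ?thesis
    proof
      fix i assume i: "i \<in> {1..s}"
      have "0 < x i" using xp i by (simp add: pos_steady_states_def)
      also have "x i = Xl cs (x 1) i" using xX[OF xp] by metis
      finally show "0 < A i * \<sigma> + B cs i" using i x by (simp add: Xl_def)
    qed
  qed
  have Sgroot: "gf \<kappa>s cs \<sigma> = 0" if "\<sigma> \<in> Sg" for \<sigma>
  proof -
    have "\<sigma> \<in> (\<lambda>x. x 1) ` T" using that unfolding Sg_def .
    then obtain x where x: "x \<in> T" "\<sigma> = x 1" by (rule imageE) simp
    have xp: "x \<in> pos_steady_states s m \<alpha> \<beta> \<kappa>s cs" using x T(1) by auto
    have "rate_fun s m \<alpha> \<beta> \<kappa>s x 1 = 0" using xp one_in by (simp add: pos_steady_states_def)
    then show ?thesis using xX[OF xp] x by (simp add: gf_def)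
  qed
  have Sgder: "\<exists>\<mu><0. (gf \<kappa>s cs has_real_derivative \<mu>) (at \<sigma>)" if "\<sigma> \<in> Sg" for \<sigma>
  proof -
    have "\<sigma> \<in> (\<lambda>x. x 1) ` T" using that unfolding Sg_def .
    then obtain x where x: "x \<in> T" "\<sigma> = x 1" by (rule imageE) simp
    have xp: "x \<in> pos_steady_states s m \<alpha> \<beta> \<kappa>s cs" using x T(1) by auto
    show ?thesis using stable_deriv[OF xp] T(3) x by auto
  qed
  have Sgne: "Sg \<noteq> {}" using cardSg by auto
  then obtain t0 where t0: "t0 \<in> Sg" by blast
  interpret clsloc s m \<alpha> \<beta> cs R \<tau> t0
    using reps std tauH tauA tauI Sgfeas[OF t0] by unfold_locales auto
  define Ls where "Ls = (\<Sum>j\<in>L. St 1 j * (\<kappa>s j * V j))"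
  have eqL: "(\<Sum>j\<in>L_set s m \<alpha> \<beta> cs \<tau>.
           stoich \<alpha> \<beta> 1 j * \<kappa>s j
           * (\<Prod>i\<in>J_set s \<alpha> \<beta>. \<bar>A_coef \<alpha> \<beta> i\<bar> ^ \<alpha> i j)
           * (\<Prod>i\<in>{1..s} - J_set s \<alpha> \<beta>. B_coef \<alpha> \<beta> cs i ^ \<alpha> i j)
           * (\<Prod>k\<in>H_set s m \<alpha> \<beta> cs R - {\<tau>}.
                (B_coef \<alpha> \<beta> cs k / \<bar>A_coef \<alpha> \<beta> k\<bar>
                 - A_coef \<alpha> \<beta> k / \<bar>A_coef \<alpha> \<beta> k\<bar> * (B_coef \<alpha> \<beta> cs \<tau> / A_coef \<alpha> \<beta> \<tau>))
                ^ gamma s m \<alpha> \<beta> cs k j)) = Ls"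
    unfolding Ls_def V_def E_def by (intro sum.cong refl) (simp add: mult.assoc)
  show ?thesis unfolding eqL
  proof (rule ccontr)
    assume "\<not> 0 < Ls"
    then have Lsle: "Ls \<le> 0" by simp
    have Lsub: "L \<subseteq> {1..m}" by (auto simp: L_set_def)
    have finL: "finite L" using Lsub finite_subset by blast
    have "ph \<tau> \<in> (\<lambda>j. \<Sum>l\<in>cl \<tau>. \<alpha> l j) ` {1..m}" unfolding phi_def
      by (rule Min_in) (use m_ge1 in auto)
    then obtain jm where jm: "jm \<in> {1..m}" "(\<Sum>l\<in>cl \<tau>. \<alpha> l jm) = ph \<tau>" by auto
    then have "jm \<in> L" by (simp add: L_set_def gamma_def)
    then have Lne: "L \<noteq> {}" by auto
    have "\<exists>j\<in>L. St 1 j < 0"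
    proof (rule ccontr)
      assume "\<not> (\<exists>j\<in>L. St 1 j < 0)"
      then have pos: "\<forall>j\<in>L. 0 < St 1 j" using stoich1_nz Lsub by force
      have "0 < Ls" unfolding Ls_def
      proof (rule sum_pos[OF finL Lne])
        fix j assume j: "j \<in> L"
        then have "0 < \<kappa>s j" using kpos Lsub by auto
        then show "0 < St 1 j * (\<kappa>s j * V j)" using pos j V_pos by simp
      qed
      then show False using Lsle by simp
    qed
    then obtain j0 where j0: "j0 \<in> L" "St 1 j0 < 0" by blast
    have j0m: "j0 \<in> {1..m}" using j0 Lsub by auto
    define M where "M = Max Sg"
    have Sg_gt_p: "p < \<sigma>" if "\<sigma> \<in> Sg" for \<sigma>
    proof -
      have "0 < A \<tau> * \<sigma> + Bc \<tau>" using Sgfeas[OF that] tau_s by blast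
      then show ?thesis unfolding p_def by (rule lin_pos[OF _ tauA])
    qed
    have Sg_le_M: "\<sigma> \<le> M" if "\<sigma> \<in> Sg" for \<sigma> using finSg that by (simp add: M_def)
    define K where "K = M - p + 2"
    have Kpos: "0 < K" using Sg_gt_p[OF t0] Sg_le_M[OF t0] by (simp add: K_def)
    have ellSg: "\<forall>l\<in>{1..s}. 0 < ell l \<sigma> \<and> 0 < ell' K l \<sigma>" if "\<sigma> \<in> Sg" for \<sigma>
    proof
      fix l assume l: "l \<in> {1..s}"
      have e: "0 < ell l \<sigma>" using Sgfeas[OF that] l by (simp add: ell_def)
      have "0 < ell' K l \<sigma>"
      proof (cases "modi l")
        case True
        have "\<bar>\<sigma> - p\<bar> < K" using Sg_gt_p[OF that] Sg_le_M[OF that] by (simp add: K_def)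
        then show ?thesis by (rule ell'_mod_pos[OF True Kpos])
      next
        case False
        then show ?thesis using e ell'_unmod by simp
      qed
      then show "0 < ell l \<sigma> \<and> 0 < ell' K l \<sigma>" using e by simp
    qed
    have cont_ell: "isCont (ell l) x" for l x unfolding ell_def by (intro continuous_intros)
    have cont_ell': "isCont (ell' K l) x" for l x unfolding ell'_def by (intro continuous_intros)
    have ev: "eventually (\<lambda>h. 0 < h \<and> h < 1 \<and> (\<forall>\<sigma>\<in>Sg. (h < \<sigma> - p \<and> (0 < gf \<kappa>s cs (\<sigma> - h) \<and> gf \<kappa>s cs (\<sigma> + h) < 0))
        \<and> (\<forall>l\<in>{1..s}. (0 < ell l (\<sigma> - h) \<and> 0 < ell l (\<sigma> + h)) \<and> (0 < ell' K l (\<sigma> - h) \<and> 0 < ell' K l (\<sigma> + h))))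
        \<and> (\<forall>\<sigma>\<in>Sg. \<forall>\<sigma>'\<in>Sg. \<sigma> < \<sigma>' \<longrightarrow> h < (\<sigma>' - \<sigma>) / 2)) (at_right 0)"
    proof (intro eventually_conj)
      show "eventually (\<lambda>h. 0 < h) (at_right (0::real))" by (rule eventually_at_right_less)
      show "eventually (\<lambda>h. h < 1) (at_right (0::real))" by (rule ev_small) simp
      show "eventually (\<lambda>h. \<forall>\<sigma>\<in>Sg. (h < \<sigma> - p \<and> (0 < gf \<kappa>s cs (\<sigma> - h) \<and> gf \<kappa>s cs (\<sigma> + h) < 0))
        \<and> (\<forall>l\<in>{1..s}. (0 < ell l (\<sigma> - h) \<and> 0 < ell l (\<sigma> + h)) \<and> (0 < ell' K l (\<sigma> - h) \<and> 0 < ell' K l (\<sigma> + h)))) (at_right 0)"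
      proof (rule eventually_ball_finite[OF finSg], rule ballI)
        fix \<sigma> assume \<sigma>: "\<sigma> \<in> Sg"
        obtain \<mu> where \<mu>: "\<mu> < 0" "(gf \<kappa>s cs has_real_derivative \<mu>) (at \<sigma>)" using Sgder[OF \<sigma>] by blast
        show "eventually (\<lambda>h. (h < \<sigma> - p \<and> (0 < gf \<kappa>s cs (\<sigma> - h) \<and> gf \<kappa>s cs (\<sigma> + h) < 0))
        \<and> (\<forall>l\<in>{1..s}. (0 < ell l (\<sigma> - h) \<and> 0 < ell l (\<sigma> + h)) \<and> (0 < ell' K l (\<sigma> - h) \<and> 0 < ell' K l (\<sigma> + h)))) (at_right 0)"
        proof -
          have a: "eventually (\<lambda>h. h < \<sigma> - p) (at_right 0)" using Sg_gt_p[OF \<sigma>] by (intro ev_small) simp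
          have b: "eventually (\<lambda>h. 0 < gf \<kappa>s cs (\<sigma> - h) \<and> gf \<kappa>s cs (\<sigma> + h) < 0) (at_right 0)"
            by (rule ev_deriv[OF \<mu>(2,1) Sgroot[OF \<sigma>]])
          have c: "eventually (\<lambda>h. \<forall>l\<in>{1..s}. (0 < ell l (\<sigma> - h) \<and> 0 < ell l (\<sigma> + h)) \<and> (0 < ell' K l (\<sigma> - h) \<and> 0 < ell' K l (\<sigma> + h))) (at_right 0)"
          proof (rule eventually_ball_finite, simp, rule ballI)
            fix l assume l: "l \<in> {1..s}"
            have p1: "0 < ell l \<sigma>" "0 < ell' K l \<sigma>" using ellSg[OF \<sigma>] l by auto
            show "eventually (\<lambda>h. (0 < ell l (\<sigma> - h) \<and> 0 < ell l (\<sigma> + h)) \<and> (0 < ell' K l (\<sigma> - h) \<and> 0 < ell' K l (\<sigma> + h))) (at_right 0)"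
              by (intro eventually_conj ev_cont_pos[OF cont_ell tl_minus p1(1)] ev_cont_pos[OF cont_ell tl_plus p1(1)]
                  ev_cont_pos[OF cont_ell' tl_minus p1(2)] ev_cont_pos[OF cont_ell' tl_plus p1(2)])
          qed
          show ?thesis by (rule eventually_conj[OF eventually_conj[OF a b] c])
        qed
      qed
      show "eventually (\<lambda>h. \<forall>\<sigma>\<in>Sg. \<forall>\<sigma>'\<in>Sg. \<sigma> < \<sigma>' \<longrightarrow> h < (\<sigma>' - \<sigma>) / 2) (at_right 0)"
      proof (rule eventually_ball_finite[OF finSg], rule ballI, rule eventually_ball_finite[OF finSg], rule ballI)
        fix \<sigma> \<sigma>' assume "\<sigma> \<in> Sg" "\<sigma>' \<in> Sg"
        show "eventually (\<lambda>h. \<sigma> < \<sigma>' \<longrightarrow> h < (\<sigma>' - \<sigma>) / 2) (at_right 0)"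
        proof (cases "\<sigma> < \<sigma>'")
          case True
          then show ?thesis using ev_small[of "(\<sigma>' - \<sigma>) / 2"] by (auto elim: eventually_mono)
        qed simp
      qed
    qed
    obtain h where h: "0 < h" "h < 1"
      "\<And>\<sigma>. \<sigma> \<in> Sg \<Longrightarrow> h < \<sigma> - p \<and> (0 < gf \<kappa>s cs (\<sigma> - h) \<and> gf \<kappa>s cs (\<sigma> + h) < 0)"
      "\<And>\<sigma> l. \<sigma> \<in> Sg \<Longrightarrow> l \<in> {1..s} \<Longrightarrow> (0 < ell l (\<sigma> - h) \<and> 0 < ell l (\<sigma> + h)) \<and> (0 < ell' K l (\<sigma> - h) \<and> 0 < ell' K l (\<sigma> + h))"
      "\<And>\<sigma> \<sigma>'. \<sigma> \<in> Sg \<Longrightarrow> \<sigma>' \<in> Sg \<Longrightarrow> \<sigma> < \<sigma>' \<Longrightarrow> h < (\<sigma>' - \<sigma>) / 2"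
      using eventually_happens'[OF _ ev] by auto
    have sgn': "0 < gf \<kappa>s (c' K) (\<sigma> - h) \<and> gf \<kappa>s (c' K) (\<sigma> + h) < 0" if \<sigma>: "\<sigma> \<in> Sg" for \<sigma>
    proof -
      have pm: "\<forall>l\<in>{1..s}. 0 < ell l (\<sigma> - h) \<and> 0 < ell' K l (\<sigma> - h)"
           and pp: "\<forall>l\<in>{1..s}. 0 < ell l (\<sigma> + h) \<and> 0 < ell' K l (\<sigma> + h)" using h(4)[OF \<sigma>] by auto
      have "gf \<kappa>s (c' K) (\<sigma> - h) = RR K (\<sigma> - h) * gf \<kappa>s cs (\<sigma> - h)" by (rule gf_ratio[OF pm])
      moreover have "gf \<kappa>s (c' K) (\<sigma> + h) = RR K (\<sigma> + h) * gf \<kappa>s cs (\<sigma> + h)" by (rule gf_ratio[OF pp])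
      moreover have "0 < RR K (\<sigma> - h)" "0 < RR K (\<sigma> + h)" using RR_pos pm pp by auto
      ultimately show ?thesis using h(3)[OF \<sigma>] by (simp add: mult_pos_neg)
    qed
    define mon where "mon t = St 1 j0 * (\<Prod>l=1..s. (A l * t + B_coef \<alpha> \<beta> (c' K) l) ^ \<alpha> l j0)" for t
    have gpert: "gf (\<kappa>s(j0 := \<kappa>s j0 + e)) (c' K) t = gf \<kappa>s (c' K) t + e * mon t" for e t
      unfolding mon_def by (rule gf_pert[OF j0m])
    have ev2: "eventually (\<lambda>e. 0 < e \<and> (\<forall>\<sigma>\<in>Sg. 0 < gf \<kappa>s (c' K) (\<sigma> - h) + e * mon (\<sigma> - h) \<and>
                 gf \<kappa>s (c' K) (\<sigma> + h) + e * mon (\<sigma> + h) < 0)) (at_right 0)"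
    proof (rule eventually_conj[OF eventually_at_right_less], rule eventually_ball_finite[OF finSg], rule ballI)
      fix \<sigma> assume \<sigma>: "\<sigma> \<in> Sg"
      have t1: "((\<lambda>e. gf \<kappa>s (c' K) (\<sigma> - h) + e * mon (\<sigma> - h)) \<longlongrightarrow> gf \<kappa>s (c' K) (\<sigma> - h)) (at_right 0)"
        by (intro tendsto_eq_intros) auto
      have t2: "((\<lambda>e. gf \<kappa>s (c' K) (\<sigma> + h) + e * mon (\<sigma> + h)) \<longlongrightarrow> gf \<kappa>s (c' K) (\<sigma> + h)) (at_right 0)"
        by (intro tendsto_eq_intros) auto
      show "eventually (\<lambda>e. 0 < gf \<kappa>s (c' K) (\<sigma> - h) + e * mon (\<sigma> - h) \<and>
                 gf \<kappa>s (c' K) (\<sigma> + h) + e * mon (\<sigma> + h) < 0) (at_right 0)"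
        using sgn'[OF \<sigma>] by (intro eventually_conj order_tendstoD(1)[OF t1] order_tendstoD(2)[OF t2]) auto
    qed
    obtain \<epsilon> where eps: "0 < \<epsilon>" "\<And>\<sigma>. \<sigma> \<in> Sg \<Longrightarrow> 0 < gf \<kappa>s (c' K) (\<sigma> - h) + \<epsilon> * mon (\<sigma> - h) \<and>
                 gf \<kappa>s (c' K) (\<sigma> + h) + \<epsilon> * mon (\<sigma> + h) < 0"
      using eventually_happens'[OF _ ev2] by auto
    define \<kappa>' where "\<kappa>' = \<kappa>s(j0 := \<kappa>s j0 + \<epsilon>)"
    define f where "f = gf \<kappa>' (c' K)"
    have fsig: "0 < f (\<sigma> - h) \<and> f (\<sigma> + h) < 0" if "\<sigma> \<in> Sg" for \<sigma>
      using eps(2)[OF that] by (simp add: f_def \<kappa>'_def gpert)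
    have kpos': "\<forall>j\<in>{1..m}. 0 < \<kappa>' j"
    proof
      fix j assume j: "j \<in> {1..m}"
      then have "0 < \<kappa>s j" using kpos by blast
      then show "0 < \<kappa>' j" using eps(1) by (cases "j = j0") (auto simp: \<kappa>'_def)
    qed
    have Ls': "(\<Sum>j\<in>L. St 1 j * (\<kappa>' j * V j)) = Ls + \<epsilon> * (St 1 j0 * V j0)"
      unfolding Ls_def \<kappa>'_def by (rule sum_upd[OF finL j0(1)])
    have "\<epsilon> * (St 1 j0 * V j0) < 0" using eps(1) j0(2) V_pos[of j0] by (simp add: mult_pos_neg mult_neg_pos)
    then have Ls'neg: "(\<Sum>j\<in>L. St 1 j * (\<kappa>' j * V j)) < 0" using Ls' Lsle by simp
    have "Br K \<kappa>' p = CC K * (\<Sum>j\<in>L. St 1 j * (\<kappa>' j * V j))"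
      unfolding Br_p sum_distrib_left
    proof (intro sum.cong refl)
      fix j assume "j \<in> L"
      then have "j \<in> {1..m}" using Lsub by auto
      then show "St 1 j * (\<kappa>' j * Wt K j p) = CC K * (St 1 j * (\<kappa>' j * V j))"
        by (simp add: Wt_p ac_simps)
    qed
    then have Brneg: "Br K \<kappa>' p < 0" using CC_pos[OF Kpos] Ls'neg by (simp add: mult_pos_neg)
    have tid: "((\<lambda>t. t) \<longlongrightarrow> p) (at_right p)" by (rule tendsto_ident_at)
    have ev3: "eventually (\<lambda>t. p < t \<and> Br K \<kappa>' t < 0 \<and> (\<forall>l\<in>{1..s}. 0 < ell' K l t) \<and> (\<forall>\<sigma>\<in>Sg. t < \<sigma> - h)) (at_right p)"
    proof (intro eventually_conj)
      show "eventually (\<lambda>t. p < t) (at_right p)" by (rule eventually_at_right_less)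
      show "eventually (\<lambda>t. Br K \<kappa>' t < 0) (at_right p)" by (rule ev_cont_neg[OF Br_cont tid Brneg])
      show "eventually (\<lambda>t. \<forall>l\<in>{1..s}. 0 < ell' K l t) (at_right p)"
      proof (rule eventually_ball_finite, simp, rule ballI)
        fix l assume l: "l \<in> {1..s}"
        show "eventually (\<lambda>t. 0 < ell' K l t) (at_right p)"
        proof (cases "l \<in> Z")
          case True
          have "A l > 0" using Z_pos[OF True] .
          then show ?thesis using eventually_at_right_less[of p]
            by (auto elim!: eventually_mono simp: ell'_Z[OF True])
        next
          case False
          show ?thesis by (rule ev_cont_pos[OF cont_ell' tid ell'_p_pos[OF Kpos l False]])
        qed
      qed
      show "eventually (\<lambda>t. \<forall>\<sigma>\<in>Sg. t < \<sigma> - h) (at_right p)"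
      proof (rule eventually_ball_finite[OF finSg], rule ballI)
        fix \<sigma> assume \<sigma>: "\<sigma> \<in> Sg"
        have "p < \<sigma> - h" using h(3)[OF \<sigma>] by simp
        then show "eventually (\<lambda>t. t < \<sigma> - h) (at_right p)" by (rule order_tendstoD(2)[OF tid])
      qed
    qed
    obtain b where b: "p < b" "Br K \<kappa>' b < 0" "\<And>l. l \<in> {1..s} \<Longrightarrow> 0 < ell' K l b" "\<And>\<sigma>. \<sigma> \<in> Sg \<Longrightarrow> b < \<sigma> - h"
      using eventually_happens'[OF _ ev3] by auto
    have fb: "f b < 0"
    proof -
      have "0 < (b - p) ^ ph \<tau>" using b(1) by simp
      then show ?thesis using b(2) by (simp add: f_def gf_br mult_pos_neg)
    qed
    obtain ss where ss: "sorted_wrt (<) ss" "set ss = Sg" "length ss = card Sg"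
      using finite_set_strict_sorted[OF finSg] by blast
    have ssl: "length ss = N + 1" using ss(3) cardSg by simp
    have ssin: "ss ! i \<in> Sg" if "i \<le> N" for i using that ss(2) ssl nth_mem[of i ss] by auto
    define Q where "Q k = (if k = 0 then b else if odd k then ss ! ((k - 1) div 2) - h else ss ! ((k - 2) div 2) + h)" for k
    define n where "n = 2 * N + 2"
    have fsign: "(even k \<longrightarrow> f (Q k) < 0) \<and> (odd k \<longrightarrow> 0 < f (Q k))" if k: "k \<le> n" for k
    proof (cases "k = 0")
      case True
      then show ?thesis using fb by (simp add: Q_def)
    next
      case False
      show ?thesis
      proof (cases "odd k")
        case True
        then obtain i where i: "k = 2 * i + 1" by (rule oddE)
        then have "i \<le> N" using k by (simp add: n_def)
        then have "0 < f (ss ! i - h)" using fsig[OF ssin] by blast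
        then show ?thesis using True i by (simp add: Q_def)
      next
        case ev: False
        then obtain i where i: "k = 2 * i" by auto
        then have i1: "1 \<le> i" "i - 1 \<le> N" using False k by (auto simp: n_def)
        have "(k - 2) div 2 = i - 1" using i i1 by simp
        moreover have "f (ss ! (i - 1) + h) < 0" using fsig[OF ssin[OF i1(2)]] by blast
        ultimately show ?thesis using ev False by (simp add: Q_def)
      qed
    qed
    have fsg: "f (Q i) * f (Q (Suc i)) < 0" if i: "i < n" for i
    proof (cases "even i")
      case True
      then have "f (Q i) < 0" "0 < f (Q (Suc i))" using fsign[of i] fsign[of "Suc i"] i by auto
      then show ?thesis by (simp add: mult_neg_pos)
    next
      case False
      then have "0 < f (Q i)" "f (Q (Suc i)) < 0" using fsign[of i] fsign[of "Suc i"] i by auto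
      then show ?thesis by (simp add: mult_pos_neg)
    qed
    have Qmono: "Q i < Q (Suc i)" if i: "i < n" for i
    proof (cases "i = 0")
      case True
      then show ?thesis using b(4)[OF ssin[of 0]] by (simp add: Q_def)
    next
      case i0: False
      show ?thesis
      proof (cases "odd i")
        case True
        then obtain j where j: "i = 2 * j + 1" by (rule oddE)
        then have "Suc i = 2 * (j + 1)" by simp
        then have "Q (Suc i) = ss ! j + h" by (simp add: Q_def)
        moreover have "Q i = ss ! j - h" using j by (simp add: Q_def)
        ultimately show ?thesis using h(1) by simp
      next
        case False
        then obtain j where j: "i = 2 * j" by auto
        then have j1: "1 \<le> j" "j \<le> N" using i0 i by (auto simp: n_def)
        have d: "(i - 2) div 2 = j - 1" using j j1 by (cases j) auto
        have "Q i = ss ! (j - 1) + h" using d i0 False by (simp add: Q_def)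
        moreover have "Q (Suc i) = ss ! j - h" using j by (simp add: Q_def)
        moreover have "ss ! (j - 1) < ss ! j" using sorted_wrt_nth_less[OF ss(1), of "j - 1" j] j1 ssl by simp
        moreover have "h < (ss ! j - ss ! (j - 1)) / 2"
          using h(5)[OF ssin ssin] j1 calculation(3) by simp
        ultimately show ?thesis by simp
      qed
    qed
    have fcont: "isCont f x" for x unfolding f_def by (rule gf_cont)
    obtain r where r: "inj_on r {..<n}" "\<forall>i<n. Q 0 < r i \<and> r i < Q n \<and> f (r i) = 0"
      using alt_roots[of f n Q, OF fcont Qmono fsg] by blast
    have Qn: "Q n = ss ! N + h" by (simp add: Q_def n_def)
    have Q0: "Q 0 = b" by (simp add: Q_def)
    have posr: "Xl (c' K) (r i) \<in> pos_steady_states s m \<alpha> \<beta> \<kappa>' (c' K)" if i: "i < n" for i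
    proof (rule X_pos)
      show "\<forall>l\<in>{1..s}. 0 < A l * r i + B_coef \<alpha> \<beta> (c' K) l"
      proof
        fix l assume l: "l \<in> {1..s}"
        have sN: "ss ! N \<in> Sg" using ssin by simp
        have a1: "0 < A l * b + B' K l" using b(3)[OF l] unfolding ell'_def .
        have a2: "0 < A l * (ss ! N + h) + B' K l" using h(4)[OF sN l] unfolding ell'_def by blast
        have ri: "b \<le> r i" "r i \<le> ss ! N + h" using r(2) i Qn Q0 by auto
        have "0 < A l * r i + B' K l" by (rule aff_between[OF a1 a2 ri])
        then show "0 < A l * r i + B_coef \<alpha> \<beta> (c' K) l" using Bc'_eq[OF l] by simp
      qed
      show "gf \<kappa>' (c' K) (r i) = 0" using r(2) i by (simp add: f_def)
    qed
    have sub: "(\<lambda>i. Xl (c' K) (r i)) ` {..<n} \<subseteq> pos_steady_states s m \<alpha> \<beta> \<kappa>' (c' K)"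
      using posr by auto
    have inj2: "inj_on (\<lambda>i. Xl (c' K) (r i)) {..<n}"
    proof (rule inj_onI)
      fix i j assume ij: "i \<in> {..<n}" "j \<in> {..<n}" "Xl (c' K) (r i) = Xl (c' K) (r j)"
      then have "r i = r j" using Xl1 by metis
      then show "i = j" using r(1) ij by (auto dest: inj_onD)
    qed
    have cardimg: "card ((\<lambda>i. Xl (c' K) (r i)) ` {..<n}) = n" using card_image[OF inj2] by simp
    have capb: "ecard (pos_steady_states s m \<alpha> \<beta> \<kappa>' (c' K)) \<le> cap_pos s m \<alpha> \<beta>"
      unfolding cap_pos_def by (rule Sup_upper) (use kpos' in blast)
    show False
    proof (cases "finite (pos_steady_states s m \<alpha> \<beta> \<kappa>' (c' K))")
      case True
      have "n \<le> card (pos_steady_states s m \<alpha> \<beta> \<kappa>' (c' K))"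
        using card_mono[OF True sub] cardimg by simp
      moreover have "card (pos_steady_states s m \<alpha> \<beta> \<kappa>' (c' K)) \<le> 2 * N + 1"
        using capb True cap by (simp add: ecard_def)
      ultimately show False by (simp add: n_def)
    next
      case False
      then show False using capb cap by (simp add: ecard_def)
    qed
  qed
qed

end
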